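(* For every integer $d\ge 1$ there exists a constant $C_d>0$ such that for all $n\ge 1$ and all $A=\sum_{\mathbf{s}\in\{0,1,2,3\}^n,\ |\mathbf{s}|\le d}\widehat{A}_{\mathbf{s}}\,\sigma_{\mathbf{s}}\in M_2(\mathbb{C})^{\otimes n}$ of degree at most $d$, \[ \Big(\sum_{|\mathbf{s}|\le d}|\widehat{A}_{\mathbf{s}}|^{\frac{2d}{d+1}}\Big)^{\frac{d+1}{2d}}\le C_d\,\|A\|, \] where $\|A\|$ is the operator norm. Moreover, one can take $C_d\le 3^d\,\mathrm{BH}^{\le d}_{\{\pm1\}}$.
   Context: Pauli matrices: $\sigma_0=I_2$, $\sigma_1=\begin{pmatrix}0&1\\1&0\end{pmatrix}$, $\sigma_2=\begin{pmatrix}0&-i\\ i&0\end{pmatrix}$, $\sigma_3=\begin{pmatrix}1&0\\0&-1\end{pmatrix}$. For $\mathbf{s}=(s_1,\dots,s_n)\in\{0,1,2,3\}^n$, $\sigma_{\mathbf{s}}=\sigma_{s_1}\otimes\cdots\otimes\sigma_{s_n}$; these form a basis of $M_2(\mathbb{C})^{\otimes n}$, so every $A$ has a unique expansion $A=\sum_{\mathbf{s}}\widehat{A}_{\mathbf{s}}\sigma_{\mathbf{s}}$. $|\mathbf{s}|$ denotes the number of nonzero entries of $\mathbf{s}$; $A$ is of degree $d$ if $\widehat{A}_{\mathbf{s}}=0$ whenever $|\mathbf{s}|>d$. For a function $f:\{-1,1\}^m\to\mathbb{C}$ write $f=\sum_{S\subset[m]}\widehat f(S)\chi_S$ with $\chi_S(x)=\prod_{j\in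 S}x_j$; $f$ has degree $d$ if $\widehat f(S)=0$ for $|S|>d$. $\mathrm{BH}^{\le d}_{\{\pm1\}}$ denotes the best constant $C$ such that for all $m\ge1$ and all $f:\{-1,1\}^m\to\mathbb{C}$ of degree $d$, $\big(\sum_{|S|\le d}|\widehat f(S)|^{\frac{2d}{d+1}}\big)^{\frac{d+1}{2d}}\le C\|f\|_\infty$ (this constant is known to be finite, indeed at most $C^{\sqrt{d\log d}}$ for an absolute $C$, by Defant–Mastyło–Pérez). *)

theory Defs
  imports "HOL-Analysis.Analysis"
begin

text \<open>Computational basis of (C^2)^{tensor n}: bool lists of length n (False = e_0, True = e_1).
  Matrices in M_2(C)^{tensor n} are functions row \<Rightarrow> col \<Rightarrow> complex on this index set.\<close>

definition cube :: "nat \<Rightarrow> bool list set" where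
  "cube n = {xs. length xs = n}"

definition pwords :: "nat \<Rightarrow> nat list set" where
  "pwords n = {s. length s = n \<and> set s \<subseteq> {0,1,2,3}}"

definition pweight :: "nat list \<Rightarrow> nat" where
  "pweight s = card {i. i < length s \<and> s ! i \<noteq> 0}"

definition pauli :: "nat \<Rightarrow> bool \<Rightarrow> bool \<Rightarrow> complex" where
  "pauli k r c =
     (if k = 0 then (if r = c then 1 else 0)
      else if k = 1 then (if r = c then 0 else 1)
      else if k = 2 then (if r = c then 0 else if r then \<i> else - \<i>)
      else (if r = c then (if r then -1 else 1) else 0))"

definition pauli_tensor :: "nat list \<Rightarrow> bool list \<Rightarrow> bool list \<Rightarrow> complex" where
  "pauli_tensor s r c = (\<Prod>i<length s. pauli (s ! i) (r ! i) (c ! i))"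

definition op_norm :: "nat \<Rightarrow> (bool list \<Rightarrow> bool list \<Rightarrow> complex) \<Rightarrow> real" where
  "op_norm n A = Sup {sqrt (\<Sum>y\<in>cube n. (cmod (\<Sum>x\<in>cube n. A y x * v x))\<^sup>2) | v.
                        (\<Sum>x\<in>cube n. (cmod (v x))\<^sup>2) = 1}"

text \<open>Boolean cube {-1,1}^m as bool lists of length m (True = 1, False = -1); characters chi_S.\<close>
definition chi :: "nat set \<Rightarrow> bool list \<Rightarrow> complex" where
  "chi S x = (\<Prod>j\<in>S. if x ! j then 1 else -1)"

text \<open>A function f of degree d on {-1,1}^m is given by its Fourier coefficients g (supported on
  subsets of {0..<m} of size at most d), f = sum_S g S chi_S.\<close>
definition BH_consts :: "nat \<Rightarrow> real set" where
  "BH_consts d = {C. C \<ge> 0 \<and> (\<forall>(m::nat) (g :: nat set \<Rightarrow> complex). m \<ge> 1 \<longrightarrow>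
      (\<forall>S. card S > d \<longrightarrow> g S = 0) \<longrightarrow>
      (\<Sum>S\<in>{S. S \<subseteq> {0..<m} \<and> card S \<le> d}. cmod (g S) powr (2 * real d / (real d + 1)))
          powr ((real d + 1) / (2 * real d))
      \<le> C * Max ((\<lambda>x. cmod (\<Sum>S\<in>Pow {0..<m}. g S * chi S x)) ` cube m))}"

definition BH :: "nat \<Rightarrow> real" where
  "BH d = Inf (BH_consts d)"

end

theory Submission
  imports Defs "HOL-Computational_Algebra.Polynomial"
begin

lemma lists_Suc_eq:
  "{xs. length xs = Suc n \<and> set xs \<subseteq> V} = (\<lambda>(v,ys). v#ys) ` (V \<times> {ys. length ys = n \<and> set ys \<subseteq> V})"
proof (intro set_eqI iffI)
  fix xs assume "xs \<in> {xs. length xs = Suc n \<and> set xs \<subseteq> V}"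
  then show "xs \<in> (\<lambda>(v,ys). v#ys) ` (V \<times> {ys. length ys = n \<and> set ys \<subseteq> V})"
    by (cases xs) (auto simp: image_iff)
qed auto

lemma sum_prod_lists:
  assumes "finite V"
  shows "(\<Sum>xs\<in>{xs. length xs = n \<and> set xs \<subseteq> V}. \<Prod>j<n. h j (xs!j)) = (\<Prod>j<n. \<Sum>v\<in>V. (h j v :: 'b::comm_semiring_1))"
proof (induction n arbitrary: h)
  case 0
  have "{xs. length xs = 0 \<and> set xs \<subseteq> V} = {[]}" by auto
  then show ?case by simp
next
  case (Suc n)
  let ?L = "{ys. length ys = n \<and> set ys \<subseteq> V}"
  have inj: "inj_on (\<lambda>(v,ys). v#ys) (V \<times> ?L)" by (auto simp: inj_on_def)
  have "(\<Sum>xs\<in>{xs. length xs = Suc n \<and> set xs \<subseteq> V}. \<Prod>j<Suc n. h j (xs!j))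
      = (\<Sum>p\<in>V \<times> ?L. \<Prod>j<Suc n. h j ((fst p # snd p)!j))"
    unfolding lists_Suc_eq by (subst sum.reindex[OF inj]) (simp add: case_prod_beta)
  also have "\<dots> = (\<Sum>v\<in>V. \<Sum>ys\<in>?L. h 0 v * (\<Prod>j<n. h (Suc j) (ys!j)))"
    unfolding prod.lessThan_Suc_shift by (simp add: sum.cartesian_product case_prod_beta)
  also have "\<dots> = (\<Sum>v\<in>V. h 0 v) * (\<Sum>ys\<in>?L. \<Prod>j<n. h (Suc j) (ys!j))"
    by (simp add: sum_product)
  also have "\<dots> = (\<Sum>v\<in>V. h 0 v) * (\<Prod>j<n. \<Sum>v\<in>V. h (Suc j) v)"
    using Suc[of "\<lambda>j. h (Suc j)"] by simp
  also have "\<dots> = (\<Prod>j<Suc n. \<Sum>v\<in>V. h j v)"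
    unfolding prod.lessThan_Suc_shift by simp
  finally show ?case .
qed

lemma cube_eq: "cube n = {xs. length xs = n \<and> set xs \<subseteq> UNIV}"
  by (simp add: cube_def)

lemma finite_cube[simp]: "finite (cube n)"
  using finite_lists_length_eq[of "UNIV::bool set" n] by (simp add: cube_def)

lemma sum_prod_cube:
  "(\<Sum>xs\<in>cube n. \<Prod>j<n. h j (xs!j)) = (\<Prod>j<n. (h j True + h j False :: 'b::comm_semiring_1))"
proof -
  have "(\<Sum>xs\<in>cube n. \<Prod>j<n. h j (xs!j)) = (\<Prod>j<n. \<Sum>v\<in>UNIV. h j v)"
    unfolding cube_eq by (rule sum_prod_lists) simp
  also have "\<dots> = (\<Prod>j<n. h j True + h j False)"
    by (simp add: UNIV_bool add.commute)
  finally show ?thesis .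
qed

lemma cube_Suc: "cube (Suc m) = (\<lambda>(x,b). x @ [b]) ` (cube m \<times> UNIV)"
proof (intro set_eqI iffI)
  fix xs assume "xs \<in> cube (Suc m)"
  then have "length xs = Suc m" by (simp add: cube_def)
  then have "xs = butlast xs @ [last xs]" "butlast xs \<in> cube m"
    by (auto simp: cube_def append_butlast_last_id[symmetric])
       (metis append_butlast_last_id list.size(3) nat.distinct(1))
  then show "xs \<in> (\<lambda>(x,b). x @ [b]) ` (cube m \<times> UNIV)"
    by (metis (no_types, lifting) SigmaI UNIV_I case_prod_conv image_eqI)
qed (auto simp: cube_def)

lemma sum_cube_Suc:
  "(\<Sum>x\<in>cube (Suc m). F x) = (\<Sum>x\<in>cube m. F (x @ [True]) + F (x @ [False]))"
proof -
  have inj: "inj_on (\<lambda>(x,b). x @ [b]) (cube m \<times> (UNIV::bool set))"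
    by (auto simp: inj_on_def)
  have "(\<Sum>x\<in>cube (Suc m). F x) = (\<Sum>p\<in>cube m \<times> UNIV. F (fst p @ [snd p]))"
    unfolding cube_Suc by (subst sum.reindex[OF inj]) (simp add: case_prod_beta)
  also have "\<dots> = (\<Sum>x\<in>cube m. \<Sum>b\<in>UNIV. F (x @ [b]))"
    by (simp add: sum.cartesian_product case_prod_beta)
  also have "\<dots> = (\<Sum>x\<in>cube m. F (x @ [True]) + F (x @ [False]))"
    by (simp add: UNIV_bool add.commute)
  finally show ?thesis .
qed

lemma sum_Pow_Suc:
  "(\<Sum>S\<in>Pow {0..<Suc m}. F S) = (\<Sum>S\<in>Pow {0..<m}. F S) + (\<Sum>S\<in>Pow {0..<m}. F (insert m S))"
proof -
  have e: "Pow {0..<Suc m} = Pow {0..<m} \<union> insert m ` Pow {0..<m}"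
    by (simp add: atLeast0_lessThan_Suc Pow_insert)
  have d: "Pow {0..<m} \<inter> insert m ` Pow {0..<m} = {}" by auto
  have inj: "inj_on (insert m) (Pow {0..<m})"
    by (auto simp: inj_on_def) (metis Diff_insert_absorb atLeastLessThan_iff less_irrefl subsetD)+
  show ?thesis unfolding e
    by (subst sum.union_disjoint) (auto simp: d sum.reindex[OF inj])
qed

lemma weighted_holder:
  fixes a b :: "'i \<Rightarrow> real"
  assumes "finite A" "\<alpha> > 0" "\<beta> > 0" "\<alpha> + \<beta> = 1"
    and "\<And>i. i \<in> A \<Longrightarrow> a i \<ge> 0" "\<And>i. i \<in> A \<Longrightarrow> b i \<ge> 0"
  shows "(\<Sum>i\<in>A. a i powr \<alpha> * b i powr \<beta>) \<le> (\<Sum>i\<in>A. a i) powr \<alpha> * (\<Sum>i\<in>A. b i) powr \<beta>"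
proof -
  define SA where "SA = (\<Sum>i\<in>A. a i)"
  define SB where "SB = (\<Sum>i\<in>A. b i)"
  have SA0: "SA \<ge> 0" "SB \<ge> 0" unfolding SA_def SB_def using assms by (auto intro: sum_nonneg)
  show ?thesis
  proof (cases "SA = 0 \<or> SB = 0")
    case True
    then have "\<forall>i\<in>A. a i = 0 \<or> b i = 0"
      using assms sum_nonneg_eq_0_iff[of A a] sum_nonneg_eq_0_iff[of A b] unfolding SA_def SB_def by auto
    then have "(\<Sum>i\<in>A. a i powr \<alpha> * b i powr \<beta>) = 0" by (intro sum.neutral) auto
    then show ?thesis using SA0 unfolding SA_def SB_def by simp
  next
    case False
    then have pos: "SA > 0" "SB > 0" using SA0 by auto
    have "\<And>i. i \<in> A \<Longrightarrow> (a i / SA) powr \<alpha> * (b i / SB) powr \<beta> \<le> \<alpha> * (a i / SA) + \<beta> * (b i / SB)"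
    proof -
      fix i assume i: "i \<in> A"
      show "(a i / SA) powr \<alpha> * (b i / SB) powr \<beta> \<le> \<alpha> * (a i / SA) + \<beta> * (b i / SB)"
      proof (cases "a i = 0 \<or> b i = 0")
        case True then show ?thesis using assms i pos by (auto intro!: add_nonneg_nonneg mult_nonneg_nonneg)
      next
        case False
        then have "a i > 0" "b i > 0" using assms i by (auto simp: less_le)
        then show ?thesis using Youngs_inequality_0[of \<alpha> \<beta> "a i / SA" "b i / SB"] assms pos by auto
      qed
    qed
    then have "(\<Sum>i\<in>A. (a i / SA) powr \<alpha> * (b i / SB) powr \<beta>) \<le> (\<Sum>i\<in>A. \<alpha> * (a i / SA) + \<beta> * (b i / SB))"
      by (rule sum_mono)
    also have "\<dots> = \<alpha> * (\<Sum>i\<in>A. a i) / SA + \<beta> * (\<Sum>i\<in>A. b i) / SB"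
      by (simp add: sum.distrib sum_distrib_left sum_divide_distrib)
    also have "\<dots> = 1" using pos assms by (simp flip: SA_def SB_def)
    finally have *: "(\<Sum>i\<in>A. (a i / SA) powr \<alpha> * (b i / SB) powr \<beta>) \<le> 1" .
    have "(\<Sum>i\<in>A. (a i / SA) powr \<alpha> * (b i / SB) powr \<beta>)
        = (\<Sum>i\<in>A. a i powr \<alpha> * b i powr \<beta>) / (SA powr \<alpha> * SB powr \<beta>)"
      using assms pos by (simp add: powr_divide sum_divide_distrib)
    with * have "(\<Sum>i\<in>A. a i powr \<alpha> * b i powr \<beta>) \<le> SA powr \<alpha> * SB powr \<beta>"
      using pos by (simp add: divide_le_eq)
    then show ?thesis unfolding SA_def SB_def .
  qed
qed

lemma L2_set_sum_le:
  assumes "finite T"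
  shows "L2_set (\<lambda>i. \<Sum>t\<in>T. v t i) A \<le> (\<Sum>t\<in>T. L2_set (v t) A)"
  using assms
proof (induction T rule: finite_induct)
  case empty then show ?case by (simp add: L2_set_def)
next
  case (insert t T)
  have "L2_set (\<lambda>i. \<Sum>t\<in>insert t T. v t i) A = L2_set (\<lambda>i. v t i + (\<Sum>t\<in>T. v t i)) A"
    using insert by simp
  also have "\<dots> \<le> L2_set (v t) A + L2_set (\<lambda>i. \<Sum>t\<in>T. v t i) A"
    by (rule L2_set_triangle_ineq)
  also have "\<dots> \<le> L2_set (v t) A + (\<Sum>t\<in>T. L2_set (v t) A)" using insert by simp
  finally show ?case using insert by simp
qed

definition sg :: "bool \<Rightarrow> real" where "sg b = (if b then 1 else -1)"

definition ev :: "(nat set \<Rightarrow> complex) \<Rightarrow> nat \<Rightarrow> bool list \<Rightarrow> complex" where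
  "ev a m x = (\<Sum>S\<in>Pow {0..<m}. a S * chi S x)"

definition evR :: "(nat set \<Rightarrow> complex) \<Rightarrow> nat \<Rightarrow> (nat \<Rightarrow> real) \<Rightarrow> complex" where
  "evR a m u = (\<Sum>S\<in>Pow {0..<m}. a S * (\<Prod>i\<in>S. complex_of_real (u i)))"

definition supn :: "(nat set \<Rightarrow> complex) \<Rightarrow> nat \<Rightarrow> real" where
  "supn a m = Max ((\<lambda>x. cmod (ev a m x)) ` cube m)"

lemma sg_abs[simp]: "\<bar>sg b\<bar> = 1" and sg_sq[simp]: "sg b * sg b = 1"
  by (auto simp: sg_def)

lemma chi_sg: "chi S x = (\<Prod>j\<in>S. complex_of_real (sg (x!j)))"
  unfolding chi_def sg_def by (intro prod.cong) auto

lemma cube_nonempty: "cube m \<noteq> {}"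
  unfolding cube_def by (metis (mono_tags, lifting) empty_Collect_eq length_replicate)

lemma supn_ge: "x \<in> cube m \<Longrightarrow> cmod (ev a m x) \<le> supn a m"
  unfolding supn_def by (intro Max_ge) auto

lemma supn_nonneg: "0 \<le> supn a m"
proof -
  obtain x where "x \<in> cube m" using cube_nonempty by blast
  then show ?thesis using supn_ge[of x m a] norm_ge_zero order_trans by blast
qed

lemma supn_le: "(\<And>x. x \<in> cube m \<Longrightarrow> cmod (ev a m x) \<le> B) \<Longrightarrow> supn a m \<le> B"
  unfolding supn_def using cube_nonempty by (subst Max_le_iff) auto

lemma ev_snoc:
  assumes "x \<in> cube m"
  shows "ev c (Suc m) (x @ [b]) = ev c m x + complex_of_real (sg b) * ev (\<lambda>S. c (insert m S)) m x"
proof -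
  have lx: "length x = m" using assms by (simp add: cube_def)
  have c1: "chi S (x @ [b]) = chi S x" if "S \<in> Pow {0..<m}" for S
    unfolding chi_def using that lx by (intro prod.cong) (auto simp: nth_append)
  have c2: "chi (insert m S) (x @ [b]) = complex_of_real (sg b) * chi S x" if "S \<in> Pow {0..<m}" for S
  proof -
    have "m \<notin> S" "finite S" using that by (auto intro: finite_subset)
    then have "chi (insert m S) (x @ [b]) = (if b then 1 else -1) * chi S (x @ [b])"
      unfolding chi_def using lx by (simp add: nth_append)
    then show ?thesis using c1[OF that] by (simp add: sg_def)
  qed
  show ?thesis
    unfolding ev_def sum_Pow_Suc using c1 c2
    by (simp add: sum_distrib_left algebra_simps)
qed

lemma parallelogram_c: "(cmod (h + e))\<^sup>2 + (cmod (h - e))\<^sup>2 = 2 * (cmod h)\<^sup>2 + 2 * (cmod e)\<^sup>2"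
  unfolding cmod_power2 by (simp add: power2_eq_square algebra_simps)

lemma parseval:
  "(\<Sum>x\<in>cube m. (cmod (ev c m x))\<^sup>2) = 2 ^ m * (\<Sum>S\<in>Pow {0..<m}. (cmod (c S))\<^sup>2)"
proof (induction m arbitrary: c)
  case 0
  have "cube 0 = {[]}" by (auto simp: cube_def)
  then show ?case by (simp add: ev_def chi_def)
next
  case (Suc m)
  let ?e = "\<lambda>S. c (insert m S)"
  have "(\<Sum>x\<in>cube (Suc m). (cmod (ev c (Suc m) x))\<^sup>2)
       = (\<Sum>x\<in>cube m. (cmod (ev c m x + ev ?e m x))\<^sup>2 + (cmod (ev c m x - ev ?e m x))\<^sup>2)"
    unfolding sum_cube_Suc by (intro sum.cong) (auto simp: ev_snoc sg_def)
  also have "\<dots> = (\<Sum>x\<in>cube m. 2 * (cmod (ev c m x))\<^sup>2 + 2 * (cmod (ev ?e m x))\<^sup>2)"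
    by (simp add: parallelogram_c)
  also have "\<dots> = 2 * (\<Sum>x\<in>cube m. (cmod (ev c m x))\<^sup>2) + 2 * (\<Sum>x\<in>cube m. (cmod (ev ?e m x))\<^sup>2)"
    by (simp add: sum.distrib sum_distrib_left)
  also have "\<dots> = 2 ^ Suc m * (\<Sum>S\<in>Pow {0..<Suc m}. (cmod (c S))\<^sup>2)"
    unfolding Suc.IH sum_Pow_Suc by (simp add: algebra_simps)
  finally show ?case .
qed

lemma cmod4: "(cmod z)^4 = ((Re z)\<^sup>2 + (Im z)\<^sup>2)\<^sup>2"
proof -
  have "(cmod z)^4 = ((cmod z)\<^sup>2)\<^sup>2" by (simp flip: power_mult)
  then show ?thesis by (simp add: cmod_power2)
qed

lemma bonami_pointwise:
  "(cmod (h + e))^4 + (cmod (h - e))^4 \<le> 2 * ((cmod h)^4 + 6 * (cmod h)\<^sup>2 * (cmod e)\<^sup>2 + (cmod e)^4)"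
proof -
  obtain a b where h: "h = Complex a b" by (cases h)
  obtain c d where e: "e = Complex c d" by (cases e)
  have "2 * ((cmod h)^4 + 6 * (cmod h)\<^sup>2 * (cmod e)\<^sup>2 + (cmod e)^4) - ((cmod (h + e))^4 + (cmod (h - e))^4)
      = 8 * (a*d - b*c)\<^sup>2"
    unfolding cmod4 cmod_power2 h e by (simp add: power2_eq_square algebra_simps)
  moreover have "8 * (a*d - b*c)\<^sup>2 \<ge> 0" by simp
  ultimately show ?thesis by linarith
qed

lemma bon_arith:
  fixes N X Y Z H E a :: real
  assumes "N > 0" "X \<ge> 0" "Y \<ge> 0" "Z \<ge> 0" "H \<ge> 0" "E \<ge> 0" "a \<ge> 0"
    "Z\<^sup>2 \<le> X * Y" "N * X \<le> a * H\<^sup>2" "N * Y \<le> a / 9 * E\<^sup>2"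
  shows "N * (X + 6 * Z + Y) \<le> a * (H + E)\<^sup>2"
proof -
  have "(N * Z)\<^sup>2 = N * N * Z\<^sup>2" by (simp add: power2_eq_square)
  also have "\<dots> \<le> N * N * (X * Y)" using assms(1,8) by (intro mult_left_mono) simp_all
  also have "\<dots> = (N * X) * (N * Y)" by simp
  also have "\<dots> \<le> (a * H\<^sup>2) * (a / 9 * E\<^sup>2)"
    by (rule mult_mono[OF assms(9) assms(10)]) (simp_all add: assms less_imp_le)
  also have "\<dots> = (a * H * E / 3)\<^sup>2" by (simp add: power2_eq_square)
  finally have "(N * Z)\<^sup>2 \<le> (a * H * E / 3)\<^sup>2" .
  then have NZ: "N * Z \<le> a * H * E / 3"
    by (rule power2_le_imp_le) (simp add: assms)
  have "N * (X + 6 * Z + Y) = N * X + 6 * (N * Z) + N * Y" by (simp add: algebra_simps)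
  also have "\<dots> \<le> a * H\<^sup>2 + 2 * (a * H * E) + a / 9 * E\<^sup>2" using NZ assms by linarith
  also have "\<dots> \<le> a * (H + E)\<^sup>2"
  proof -
    have "a / 9 * E\<^sup>2 \<le> a * E\<^sup>2" using assms(7) by (intro mult_right_mono) simp_all
    then show ?thesis by (simp add: power2_eq_square algebra_simps)
  qed
  finally show ?thesis .
qed

lemma ev_zero: "(\<And>S. S \<subseteq> {0..<m} \<Longrightarrow> c S = 0) \<Longrightarrow> ev c m x = 0"
  unfolding ev_def by (intro sum.neutral) auto

lemma bonami:
  assumes "\<forall>S. S \<subseteq> {0..<m} \<longrightarrow> k < card S \<longrightarrow> c S = 0"
  shows "2 ^ m * (\<Sum>x\<in>cube m. (cmod (ev c m x))^4) \<le> 9 ^ k * (\<Sum>x\<in>cube m. (cmod (ev c m x))\<^sup>2)\<^sup>2"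
  using assms
proof (induction m arbitrary: c k)
  case 0
  have "cube 0 = {[]}" by (auto simp: cube_def)
  moreover have "(1::real) \<le> 9 ^ k" by simp
  ultimately show ?case
    using mult_right_mono[OF \<open>(1::real) \<le> 9 ^ k\<close>, of "cmod (c {})^4"]
    by (simp add: ev_def chi_def flip: power_mult)
next
  case (Suc m)
  define ce where "ce = (\<lambda>S. c (insert m S))"
  define h where "h = ev c m"
  define e where "e = ev ce m"
  define N :: real where "N = 2 ^ m"
  define X where "X = (\<Sum>x\<in>cube m. (cmod (h x))^4)"
  define Y where "Y = (\<Sum>x\<in>cube m. (cmod (e x))^4)"
  define Z where "Z = (\<Sum>x\<in>cube m. (cmod (h x))\<^sup>2 * (cmod (e x))\<^sup>2)"
  define H where "H = (\<Sum>x\<in>cube m. (cmod (h x))\<^sup>2)"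
  define E where "E = (\<Sum>x\<in>cube m. (cmod (e x))\<^sup>2)"
  have split: "\<And>x b. x \<in> cube m \<Longrightarrow> ev c (Suc m) (x @ [b]) = h x + complex_of_real (sg b) * e x"
    unfolding h_def e_def ce_def by (rule ev_snoc)
  have hyp_h: "\<forall>S. S \<subseteq> {0..<m} \<longrightarrow> k < card S \<longrightarrow> c S = 0"
  proof (intro allI impI)
    fix S assume "S \<subseteq> {0..<m}" "k < card S"
    moreover have "{0..<m} \<subseteq> {0..<Suc m}" by auto
    ultimately show "c S = 0" using Suc.prems by (meson order_trans)
  qed
  have IHh: "N * X \<le> 9 ^ k * H\<^sup>2"
    using Suc.IH[OF hyp_h] unfolding N_def X_def H_def h_def by simp
  have IHe: "N * Y \<le> 9 ^ k / 9 * E\<^sup>2"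
  proof (cases "k = 0")
    case True
    have "ce S = 0" if "S \<subseteq> {0..<m}" for S
    proof -
      have "finite S" using that finite_subset by blast
      then have "card (insert m S) > 0" by (simp add: card_gt_0_iff)
      moreover have "insert m S \<subseteq> {0..<Suc m}" using that by auto
      ultimately show ?thesis using Suc.prems True unfolding ce_def by blast
    qed
    then have "\<And>x. e x = 0" unfolding e_def by (intro ev_zero) auto
    then show ?thesis unfolding Y_def E_def by simp
  next
    case False
    have "\<forall>S. S \<subseteq> {0..<m} \<longrightarrow> k - 1 < card S \<longrightarrow> ce S = 0"
    proof (intro allI impI)
      fix S assume S: "S \<subseteq> {0..<m}" "k - 1 < card S"
      have "finite S" "m \<notin> S" using S finite_subset by auto
      then have "card (insert m S) = Suc (card S)" by simp
      moreover have "insert m S \<subseteq> {0..<Suc m}" using S by auto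
      moreover have "k < Suc (card S)" using S False by linarith
      ultimately show "ce S = 0" using Suc.prems unfolding ce_def by auto
    qed
    from Suc.IH[OF this] have "N * Y \<le> 9 ^ (k - 1) * E\<^sup>2"
      unfolding N_def Y_def E_def e_def by simp
    moreover have "(9::real) ^ (k - 1) = 9 ^ k / 9" using False
      by (metis Suc_diff_1 neq0_conv nonzero_mult_div_cancel_left power_Suc zero_neq_numeral)
    ultimately show ?thesis by metis
  qed
  have CS: "Z\<^sup>2 \<le> X * Y"
    using Cauchy_Schwarz_ineq_sum[of "\<lambda>x. (cmod (h x))\<^sup>2" "\<lambda>x. (cmod (e x))\<^sup>2" "cube m"]
    unfolding X_def Y_def Z_def by (simp flip: power_mult)
  have S4: "(\<Sum>x\<in>cube (Suc m). (cmod (ev c (Suc m) x))^4) \<le> 2 * (X + 6 * Z + Y)"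
  proof -
    have "(\<Sum>x\<in>cube (Suc m). (cmod (ev c (Suc m) x))^4)
        = (\<Sum>x\<in>cube m. (cmod (h x + e x))^4 + (cmod (h x - e x))^4)"
      unfolding sum_cube_Suc by (intro sum.cong) (auto simp: split sg_def)
    also have "\<dots> \<le> (\<Sum>x\<in>cube m. 2 * ((cmod (h x))^4 + 6 * (cmod (h x))\<^sup>2 * (cmod (e x))\<^sup>2 + (cmod (e x))^4))"
      by (intro sum_mono bonami_pointwise)
    also have "\<dots> = 2 * (X + 6 * Z + Y)"
      unfolding X_def Y_def Z_def by (simp add: sum.distrib sum_distrib_left mult.assoc)
    finally show ?thesis .
  qed
  have S2: "(\<Sum>x\<in>cube (Suc m). (cmod (ev c (Suc m) x))\<^sup>2) = 2 * (H + E)"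
  proof -
    have "(\<Sum>x\<in>cube (Suc m). (cmod (ev c (Suc m) x))\<^sup>2)
        = (\<Sum>x\<in>cube m. (cmod (h x + e x))\<^sup>2 + (cmod (h x - e x))\<^sup>2)"
      unfolding sum_cube_Suc by (intro sum.cong) (auto simp: split sg_def)
    also have "\<dots> = (\<Sum>x\<in>cube m. 2 * (cmod (h x))\<^sup>2 + 2 * (cmod (e x))\<^sup>2)"
      by (simp add: parallelogram_c)
    also have "\<dots> = 2 * (H + E)"
      unfolding H_def E_def by (simp add: sum.distrib sum_distrib_left)
    finally show ?thesis .
  qed
  have nonneg: "X \<ge> 0" "Y \<ge> 0" "Z \<ge> 0" "H \<ge> 0" "E \<ge> 0"
    unfolding X_def Y_def Z_def H_def E_def by (auto intro!: sum_nonneg)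
  have key: "N * (X + 6 * Z + Y) \<le> 9 ^ k * (H + E)\<^sup>2"
    by (rule bon_arith) (use nonneg CS IHh IHe in \<open>auto simp: N_def\<close>)
  have "2 ^ Suc m * (\<Sum>x\<in>cube (Suc m). (cmod (ev c (Suc m) x))^4) \<le> 2 * N * (2 * (X + 6 * Z + Y))"
    using S4 unfolding N_def by simp
  also have "\<dots> = 4 * (N * (X + 6 * Z + Y))" by simp
  also have "\<dots> \<le> 4 * (9 ^ k * (H + E)\<^sup>2)" using key by simp
  also have "\<dots> = 9 ^ k * (\<Sum>x\<in>cube (Suc m). (cmod (ev c (Suc m) x))\<^sup>2)\<^sup>2"
    unfolding S2 by (simp add: power2_eq_square algebra_simps)
  finally show ?case .
qed

lemma khin_arith:
  fixes E1 E2 E3 E4 N a :: real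
  assumes "E1 \<ge> 0" "E2 \<ge> 0" "E3 \<ge> 0" "E4 \<ge> 0" "N > 0"
    "E2\<^sup>2 \<le> E1 * E3" "E3\<^sup>2 \<le> E2 * E4" "N * E4 \<le> a * E2\<^sup>2" "a \<ge> 0"
  shows "N * E2 \<le> a * E1\<^sup>2"
proof (cases "E2 = 0")
  case True
  then show ?thesis using assms by simp
next
  case False
  then have E2p: "E2 > 0" using assms by auto
  have "(E2\<^sup>2)\<^sup>2 \<le> (E1 * E3)\<^sup>2" using assms(6) E2p by (intro power_mono) auto
  also have "\<dots> = E1\<^sup>2 * E3\<^sup>2" by (simp add: power_mult_distrib)
  also have "\<dots> \<le> E1\<^sup>2 * (E2 * E4)" using assms(7) by (intro mult_left_mono) auto
  finally have "E2 * E2^3 \<le> E2 * (E1\<^sup>2 * E4)" by (simp add: power2_eq_square power3_eq_cube algebra_simps)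
  then have "E2^3 \<le> E1\<^sup>2 * E4" using E2p by simp
  then have "N * E2^3 \<le> E1\<^sup>2 * (N * E4)" using assms(5) by (simp add: algebra_simps)
  also have "\<dots> \<le> E1\<^sup>2 * (a * E2\<^sup>2)" using assms(8) by (intro mult_left_mono) auto
  finally have "E2\<^sup>2 * (N * E2) \<le> E2\<^sup>2 * (a * E1\<^sup>2)"
    by (simp add: power2_eq_square power3_eq_cube algebra_simps)
  then show ?thesis using E2p by simp
qed

lemma khintchine:
  assumes "\<forall>S. S \<subseteq> {0..<m} \<longrightarrow> k < card S \<longrightarrow> c S = 0"
  shows "2 ^ m * (\<Sum>x\<in>cube m. (cmod (ev c m x))\<^sup>2) \<le> 9 ^ k * (\<Sum>x\<in>cube m. cmod (ev c m x))\<^sup>2"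
proof -
  define g where "g x = cmod (ev c m x)" for x
  have g0: "\<And>x. g x \<ge> 0" unfolding g_def by simp
  define E1 where "E1 = (\<Sum>x\<in>cube m. g x)"
  define E2 where "E2 = (\<Sum>x\<in>cube m. (g x)\<^sup>2)"
  define E3 where "E3 = (\<Sum>x\<in>cube m. (g x)^3)"
  define E4 where "E4 = (\<Sum>x\<in>cube m. (g x)^4)"
  have CS1: "E2\<^sup>2 \<le> E1 * E3"
  proof -
    have "(\<Sum>x\<in>cube m. sqrt (g x) * (g x * sqrt (g x)))\<^sup>2
       \<le> (\<Sum>x\<in>cube m. (sqrt (g x))\<^sup>2) * (\<Sum>x\<in>cube m. (g x * sqrt (g x))\<^sup>2)"
      by (rule Cauchy_Schwarz_ineq_sum)
    moreover have "\<And>x. sqrt (g x) * (g x * sqrt (g x)) = (g x)\<^sup>2"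
      using g0 by (simp add: power2_eq_square)
    moreover have "\<And>x. (g x * sqrt (g x))\<^sup>2 = (g x)^3"
      using g0 by (simp add: power_mult_distrib power2_eq_square power3_eq_cube)
    ultimately show ?thesis using g0 unfolding E1_def E2_def E3_def by simp
  qed
  have CS2: "E3\<^sup>2 \<le> E2 * E4"
  proof -
    have "(\<Sum>x\<in>cube m. g x * (g x)\<^sup>2)\<^sup>2 \<le> (\<Sum>x\<in>cube m. (g x)\<^sup>2) * (\<Sum>x\<in>cube m. ((g x)\<^sup>2)\<^sup>2)"
      by (rule Cauchy_Schwarz_ineq_sum)
    moreover have "\<And>x. g x * (g x)\<^sup>2 = (g x)^3" by (simp add: power2_eq_square power3_eq_cube)
    moreover have "\<And>x. ((g x)\<^sup>2)\<^sup>2 = (g x)^4" by (simp flip: power_mult)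
    ultimately show ?thesis unfolding E2_def E3_def E4_def by simp
  qed
  have Bon: "2 ^ m * E4 \<le> 9 ^ k * E2\<^sup>2"
    using bonami[OF assms] unfolding E4_def E2_def g_def by simp
  have "2 ^ m * E2 \<le> 9 ^ k * E1\<^sup>2"
    by (rule khin_arith[OF _ _ _ _ _ CS1 CS2 Bon _]) (auto simp: E1_def E2_def E3_def E4_def g0 intro!: sum_nonneg)
  then show ?thesis unfolding E1_def E2_def g_def .
qed

definition wt :: "(nat \<Rightarrow> real) \<Rightarrow> nat \<Rightarrow> bool list \<Rightarrow> real" where
  "wt u m x = (\<Prod>i<m. (1 + u i * sg (x!i)) / 2)"

lemma prod_if_restrict:
  assumes "S \<subseteq> {0..<(m::nat)}"
  shows "(\<Prod>i<m. if i \<in> S then f i else 1) = (\<Prod>i\<in>S. f i)"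
proof -
  have "(\<Prod>i<m. if i \<in> S then f i else 1) = prod f ({..<m} \<inter> S)"
    by (rule prod.inter_restrict[symmetric]) simp
  also have "{..<m} \<inter> S = S" using assms by auto
  finally show ?thesis .
qed

lemma wt_chi:
  assumes "S \<subseteq> {0..<m}"
  shows "(\<Sum>x\<in>cube m. complex_of_real (wt u m x) * chi S x) = (\<Prod>i\<in>S. complex_of_real (u i))"
proof -
  define h where "h i v = complex_of_real ((1 + u i * sg v) / 2) * (if i \<in> S then complex_of_real (sg v) else 1)" for i v
  have "complex_of_real (wt u m x) * chi S x = (\<Prod>i<m. h i (x!i))" for x
  proof -
    have c: "chi S x = (\<Prod>i<m. if i \<in> S then complex_of_real (sg (x!i)) else 1)"
      unfolding chi_sg by (rule prod_if_restrict[OF assms, symmetric])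
    show ?thesis unfolding h_def wt_def of_real_prod prod.distrib c ..
  qed
  then have "(\<Sum>x\<in>cube m. complex_of_real (wt u m x) * chi S x) = (\<Prod>i<m. h i True + h i False)"
    by (simp add: sum_prod_cube)
  also have "\<dots> = (\<Prod>i<m. if i \<in> S then complex_of_real (u i) else 1)"
    by (intro prod.cong) (auto simp: h_def sg_def field_simps)
  also have "\<dots> = (\<Prod>i\<in>S. complex_of_real (u i))" by (rule prod_if_restrict[OF assms])
  finally show ?thesis .
qed

lemma wt_nonneg: "(\<And>i. i < m \<Longrightarrow> \<bar>u i\<bar> \<le> 1) \<Longrightarrow> wt u m x \<ge> 0"
  unfolding wt_def
proof (intro prod_nonneg)
  fix i assume "\<And>i. i < m \<Longrightarrow> \<bar>u i\<bar> \<le> 1" "i \<in> {..<m}"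
  then have "\<bar>u i * sg (x!i)\<bar> \<le> 1" by (simp add: abs_mult)
  then show "0 \<le> (1 + u i * sg (x ! i)) / 2" by simp
qed

lemma wt_sum: "(\<Sum>x\<in>cube m. wt u m x) = 1"
proof -
  have "(\<Sum>x\<in>cube m. complex_of_real (wt u m x) * chi {} x) = 1"
    using wt_chi[of "{}" m u] by simp
  then have "complex_of_real (\<Sum>x\<in>cube m. wt u m x) = 1" by (simp add: chi_def)
  then show ?thesis using of_real_eq_1_iff by blast
qed

lemma evR_avg: "evR a m u = (\<Sum>x\<in>cube m. complex_of_real (wt u m x) * ev a m x)"
proof -
  have "evR a m u = (\<Sum>S\<in>Pow {0..<m}. a S * (\<Sum>x\<in>cube m. complex_of_real (wt u m x) * chi S x))"
    unfolding evR_def by (intro sum.cong) (auto simp: wt_chi)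
  also have "\<dots> = (\<Sum>x\<in>cube m. complex_of_real (wt u m x) * ev a m x)"
    unfolding ev_def by (simp add: sum_distrib_left sum_distrib_right algebra_simps sum.swap[of _ "cube m"])
  finally show ?thesis .
qed

lemma MA:
  assumes "\<And>i. i < m \<Longrightarrow> \<bar>u i\<bar> \<le> 1"
  shows "cmod (evR a m u) \<le> supn a m"
proof -
  have "cmod (evR a m u) \<le> (\<Sum>x\<in>cube m. cmod (complex_of_real (wt u m x) * ev a m x))"
    unfolding evR_avg by (rule norm_sum)
  also have "\<dots> = (\<Sum>x\<in>cube m. wt u m x * cmod (ev a m x))"
    using wt_nonneg[OF assms] by (simp add: norm_mult)
  also have "\<dots> \<le> (\<Sum>x\<in>cube m. wt u m x * supn a m)"
    using wt_nonneg[OF assms] supn_ge by (intro sum_mono mult_left_mono) auto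
  also have "\<dots> = supn a m" by (simp add: sum_distrib_right[symmetric] wt_sum)
  finally show ?thesis .
qed

lemma lagrange_exists:
  fixes \<tau> :: "nat \<Rightarrow> complex"
  assumes inj: "inj_on \<tau> {0..k}"
  shows "\<exists>L. (\<forall>l\<le>k. degree (L l) \<le> k) \<and> (\<forall>l\<le>k. \<forall>l'\<le>k. poly (L l) (\<tau> l') = (if l' = l then 1 else 0))"
proof -
  define L where "L l = smult (1 / (\<Prod>l'\<in>{0..k}-{l}. (\<tau> l - \<tau> l'))) (\<Prod>l'\<in>{0..k}-{l}. [:- \<tau> l', 1:])" for l
  have deg: "degree (L l) \<le> k" if "l \<le> k" for l
  proof -
    have "degree (\<Prod>l'\<in>{0..k}-{l}. [:- \<tau> l', 1:]) \<le> (\<Sum>l'\<in>{0..k}-{l}. degree [:- \<tau> l', 1:])"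
      using degree_prod_sum_le[of "{0..k}-{l}" "\<lambda>l'. [:- \<tau> l', 1:]"] by (simp add: o_def)
    also have "\<dots> = card ({0..k}-{l})" by simp
    also have "\<dots> = k" using that by simp
    finally show ?thesis unfolding L_def using degree_smult_le order_trans by blast
  qed
  have ev: "poly (L l) (\<tau> l') = (if l' = l then 1 else 0)" if "l \<le> k" "l' \<le> k" for l l'
  proof (cases "l' = l")
    case True
    have "\<forall>l''\<in>{0..k}-{l}. \<tau> l - \<tau> l'' \<noteq> 0" using inj that by (auto dest: inj_onD)
    then have "(\<Prod>l''\<in>{0..k}-{l}. (\<tau> l - \<tau> l'')) \<noteq> 0" by simp
    then show ?thesis unfolding L_def using True by (simp add: poly_prod)
  next
    case False
    then have "l' \<in> {0..k}-{l}" using that by auto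
    then have "(\<Prod>l''\<in>{0..k}-{l}. poly [:- \<tau> l'', 1:] (\<tau> l')) = 0"
      by (intro prod_zero) auto
    then show ?thesis unfolding L_def using False by (simp add: poly_prod)
  qed
  show ?thesis using deg ev by blast
qed

lemma coeff_bound:
  "\<exists>K\<ge>0. \<forall>(c::nat\<Rightarrow>complex) M. (\<forall>t::real. -1 \<le> t \<and> t \<le> 1 \<longrightarrow> cmod (\<Sum>j\<le>k. c j * complex_of_real t ^ j) \<le> M)
       \<longrightarrow> (\<forall>j\<le>k. cmod (c j) \<le> K * M)"
proof -
  define \<tau> :: "nat \<Rightarrow> complex" where "\<tau> l = complex_of_real (real l / real (Suc k))" for l
  have inj: "inj_on \<tau> {0..k}"
  proof (intro inj_onI)
    fix x y assume "\<tau> x = \<tau> y"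
    then have "real x / real (Suc k) = real y / real (Suc k)" unfolding \<tau>_def using of_real_eq_iff by blast
    then show "x = y" by (simp del: of_nat_Suc)
  qed
  obtain L where Ldeg: "\<forall>l\<le>k. degree (L l) \<le> k"
    and Lev: "\<forall>l\<le>k. \<forall>l'\<le>k. poly (L l) (\<tau> l') = (if l' = l then 1 else 0)"
    using lagrange_exists[OF inj] by blast
  define K where "K = (\<Sum>j\<le>k. \<Sum>l\<le>k. cmod (coeff (L l) j))"
  have K0: "K \<ge> 0" unfolding K_def by (intro sum_nonneg) auto
  have main: "cmod (c j) \<le> K * M"
    if hyp: "\<forall>t::real. -1 \<le> t \<and> t \<le> 1 \<longrightarrow> cmod (\<Sum>j\<le>k. c j * complex_of_real t ^ j) \<le> M" and j: "j \<le> k"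
    for c M j
  proof -
    define P where "P = (\<Sum>j\<le>k. monom (c j) j)"
    have polyP: "poly P x = (\<Sum>j\<le>k. c j * x ^ j)" for x
      unfolding P_def by (simp add: poly_sum poly_monom)
    have coeffP: "coeff P j = c j" if "j \<le> k" for j
      unfolding P_def coeff_sum using that by (simp add: sum.delta)
    define Q where "Q = (\<Sum>l\<le>k. smult (poly P (\<tau> l)) (L l))"
    have degP: "degree P \<le> k" unfolding P_def
      by (intro degree_sum_le) (auto intro: order_trans[OF degree_monom_le])
    have degQ: "degree Q \<le> k" unfolding Q_def
      using Ldeg by (intro degree_sum_le) (auto intro: order_trans[OF degree_smult_le])
    have polyQ: "poly Q (\<tau> l') = poly P (\<tau> l')" if "l' \<le> k" for l'
    proof -
      have "poly Q (\<tau> l') = (\<Sum>l\<le>k. if l = l' then poly P (\<tau> l) else 0)"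
        unfolding Q_def poly_sum using Lev that by (intro sum.cong) auto
      also have "\<dots> = poly P (\<tau> l')" using that by (simp add: sum.delta)
      finally show ?thesis .
    qed
    have "P - Q = 0"
    proof (rule ccontr)
      assume nz: "P - Q \<noteq> 0"
      have "\<tau> ` {0..k} \<subseteq> {x. poly (P - Q) x = 0}" using polyQ by auto
      then have "card (\<tau> ` {0..k}) \<le> card {x. poly (P - Q) x = 0}"
        using poly_roots_finite[OF nz] by (intro card_mono) auto
      also have "\<dots> \<le> degree (P - Q)" by (rule card_poly_roots_bound[OF nz])
      also have "\<dots> \<le> k" using degP degQ by (rule degree_diff_le)
      finally show False using card_image[OF inj] by simp
    qed
    then have PQ: "P = Q" by simp
    have "c j = coeff Q j" using coeffP[OF j] PQ by simp
    also have "coeff Q j = (\<Sum>l\<le>k. poly P (\<tau> l) * coeff (L l) j)"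
      unfolding Q_def coeff_sum by simp
    finally have "c j = (\<Sum>l\<le>k. poly P (\<tau> l) * coeff (L l) j)" .
    moreover have "cmod (\<Sum>l\<le>k. poly P (\<tau> l) * coeff (L l) j) \<le> (\<Sum>l\<le>k. cmod (poly P (\<tau> l) * coeff (L l) j))"
      by (rule norm_sum)
    ultimately have "cmod (c j) \<le> (\<Sum>l\<le>k. cmod (poly P (\<tau> l)) * cmod (coeff (L l) j))"
      by (simp add: norm_mult)
    also have "\<dots> \<le> (\<Sum>l\<le>k. M * cmod (coeff (L l) j))"
    proof (intro sum_mono mult_right_mono)
      fix l assume "l \<in> {..k}"
      have "real l \<le> real (Suc k)" using \<open>l \<in> {..k}\<close> by simp
      then have "-1 \<le> real l / real (Suc k) \<and> real l / real (Suc k) \<le> 1"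
        by (simp add: divide_le_eq_1 del: of_nat_Suc) (smt (verit) divide_nonneg_nonneg of_nat_0_le_iff)
      then have "cmod (poly P (\<tau> l)) \<le> M"
        using hyp unfolding polyP \<tau>_def by blast
      then show "cmod (poly P (\<tau> l)) \<le> M" .
    qed simp
    also have "\<dots> = M * (\<Sum>l\<le>k. cmod (coeff (L l) j))" by (simp add: sum_distrib_left)
    also have "\<dots> \<le> M * K"
    proof (rule mult_left_mono)
      show "(\<Sum>l\<le>k. cmod (coeff (L l) j)) \<le> K"
        unfolding K_def using j
        by (intro member_le_sum[where f="\<lambda>j. \<Sum>l\<le>k. cmod (coeff (L l) j)"]) (auto intro: sum_nonneg)
      show "0 \<le> M" using hyp[rule_format, of 0] by (simp add: order_trans[OF norm_ge_zero])
    qed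
    finally show ?thesis by (simp add: mult.commute)
  qed
  show ?thesis using K0 main by blast
qed

lemma sum_group_card:
  assumes "finite A" "\<forall>S\<in>A. k < card S \<longrightarrow> F S = 0"
  shows "(\<Sum>S\<in>A. F S) = (\<Sum>j\<le>k. \<Sum>S\<in>{S\<in>A. card S = j}. F S)"
proof -
  have "(\<Sum>S\<in>A. F S) = (\<Sum>S\<in>{S\<in>A. card S \<le> k}. F S)"
    using assms by (intro sum.mono_neutral_right) auto
  also have "\<dots> = (\<Sum>j\<le>k. \<Sum>S\<in>{S. S \<in> {S\<in>A. card S \<le> k} \<and> card S = j}. F S)"
    using assms by (intro sum.group[symmetric]) auto
  also have "\<dots> = (\<Sum>j\<le>k. \<Sum>S\<in>{S\<in>A. card S = j}. F S)"
    by (intro sum.cong refl arg_cong2[where f=sum]) auto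
  finally show ?thesis .
qed

lemma evR_line:
  assumes "z \<in> cube m"
  shows "evR b m (\<lambda>i. t * sg (z!i)) = (\<Sum>S\<in>Pow {0..<m}. b S * chi S z * complex_of_real t ^ card S)"
  unfolding evR_def chi_sg
  by (intro sum.cong refl) (simp add: prod.distrib)

lemma HP:
  "\<exists>K\<ge>0. \<forall>m b z j. (\<forall>S. S \<subseteq> {0..<m} \<longrightarrow> k < card S \<longrightarrow> b S = 0) \<longrightarrow> z \<in> cube m \<longrightarrow>
      cmod (\<Sum>S\<in>{S\<in>Pow {0..<m}. card S = j}. b S * chi S z) \<le> K * supn b m"
proof -
  obtain K where K0: "K \<ge> 0" and K: "\<forall>(c::nat\<Rightarrow>complex) M. (\<forall>t::real. -1 \<le> t \<and> t \<le> 1 \<longrightarrow> cmod (\<Sum>j\<le>k. c j * complex_of_real t ^ j) \<le> M)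
       \<longrightarrow> (\<forall>j\<le>k. cmod (c j) \<le> K * M)"
    using coeff_bound[of k] by blast
  have "cmod (\<Sum>S\<in>{S\<in>Pow {0..<m}. card S = j}. b S * chi S z) \<le> K * supn b m"
    if hb: "\<forall>S. S \<subseteq> {0..<m} \<longrightarrow> k < card S \<longrightarrow> b S = 0" and z: "z \<in> cube m" for m b z j
  proof (cases "j \<le> k")
    case False
    have "(\<Sum>S\<in>{S\<in>Pow {0..<m}. card S = j}. b S * chi S z) = 0"
      using hb False by (intro sum.neutral) auto
    then show ?thesis using K0 supn_nonneg by simp
  next
    case True
    define c where "c j = (\<Sum>S\<in>{S\<in>Pow {0..<m}. card S = j}. b S * chi S z)" for j
    have "cmod (\<Sum>j\<le>k. c j * complex_of_real t ^ j) \<le> supn b m" if t: "-1 \<le> t \<and> t \<le> 1" for t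
    proof -
      have "(\<Sum>j\<le>k. c j * complex_of_real t ^ j)
          = (\<Sum>j\<le>k. \<Sum>S\<in>{S\<in>Pow {0..<m}. card S = j}. b S * chi S z * complex_of_real t ^ card S)"
        unfolding c_def sum_distrib_right by (intro sum.cong refl) auto
      also have "\<dots> = (\<Sum>S\<in>Pow {0..<m}. b S * chi S z * complex_of_real t ^ card S)"
        using hb by (intro sum_group_card[symmetric]) auto
      also have "\<dots> = evR b m (\<lambda>i. t * sg (z!i))" using evR_line[OF z] by simp
      finally have eq: "(\<Sum>j\<le>k. c j * complex_of_real t ^ j) = evR b m (\<lambda>i. t * sg (z!i))" .
      have "\<bar>t * sg (z!i)\<bar> \<le> 1" for i using t by (simp add: abs_mult abs_le_iff)
      then show ?thesis unfolding eq by (intro MA) auto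
    qed
    then have "\<forall>j\<le>k. cmod (c j) \<le> K * supn b m" using K by blast
    then show ?thesis using True unfolding c_def by blast
  qed
  then show ?thesis using K0 by blast
qed


lemma sum_swap_restr:
  assumes "finite A" "finite B"
  shows "(\<Sum>x\<in>A. \<Sum>y\<in>{y\<in>B. R x y}. f x y) = (\<Sum>y\<in>B. \<Sum>x\<in>{x\<in>A. R x y}. f x y)"
proof -
  have "(\<Sum>x\<in>A. \<Sum>y\<in>{y\<in>B. R x y}. f x y) = (\<Sum>x\<in>A. \<Sum>y\<in>B. if R x y then f x y else 0)"
    using assms by (simp add: sum.inter_filter)
  also have "\<dots> = (\<Sum>y\<in>B. \<Sum>x\<in>A. if R x y then f x y else 0)" by (rule sum.swap)
  also have "\<dots> = (\<Sum>y\<in>B. \<Sum>x\<in>{x\<in>A. R x y}. f x y)"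
    using assms by (simp add: sum.inter_filter)
  finally show ?thesis .
qed

definition gder :: "(nat set \<Rightarrow> complex) \<Rightarrow> nat \<Rightarrow> nat \<Rightarrow> bool list \<Rightarrow> complex" where
  "gder a m t x = (\<Sum>S\<in>{S\<in>Pow {0..<m}. t \<in> S}. a S * chi (S - {t}) x)"

definition bfam :: "(nat set \<Rightarrow> complex) \<Rightarrow> nat \<Rightarrow> (nat \<Rightarrow> real) \<Rightarrow> (nat \<Rightarrow> real) \<Rightarrow> nat set \<Rightarrow> complex" where
  "bfam a m y xr T = (\<Sum>S\<in>{S\<in>Pow {0..<m}. T \<subseteq> S}.
      a S / 2 ^ card S * (\<Prod>i\<in>T. complex_of_real (y i)) * (\<Prod>i\<in>S - T. complex_of_real (xr i)))"

lemma bfam_ev: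
  assumes "z \<in> cube m"
  shows "ev (bfam a m y xr) m z = evR a m (\<lambda>i. (xr i + y i * sg (z!i)) / 2)"
proof -
  have "ev (bfam a m y xr) m z = (\<Sum>T\<in>Pow {0..<m}. \<Sum>S\<in>{S\<in>Pow {0..<m}. T \<subseteq> S}.
      a S / 2 ^ card S * ((\<Prod>i\<in>T. complex_of_real (y i)) * chi T z) * (\<Prod>i\<in>S - T. complex_of_real (xr i)))"
    unfolding ev_def bfam_def sum_distrib_right by (intro sum.cong refl) (simp add: algebra_simps)
  also have "\<dots> = (\<Sum>S\<in>Pow {0..<m}. \<Sum>T\<in>{T\<in>Pow {0..<m}. T \<subseteq> S}.
      a S / 2 ^ card S * ((\<Prod>i\<in>T. complex_of_real (y i)) * chi T z) * (\<Prod>i\<in>S - T. complex_of_real (xr i)))"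
    by (rule sum_swap_restr) auto
  also have "\<dots> = (\<Sum>S\<in>Pow {0..<m}. a S / 2 ^ card S *
      (\<Sum>T\<in>Pow S. (\<Prod>i\<in>T. complex_of_real (y i * sg (z!i))) * (\<Prod>i\<in>S - T. complex_of_real (xr i))))"
  proof (intro sum.cong refl)
    fix S assume S: "S \<in> Pow {0..<m}"
    have "{T\<in>Pow {0..<m}. T \<subseteq> S} = Pow S" using S by auto
    then show "(\<Sum>T\<in>{T\<in>Pow {0..<m}. T \<subseteq> S}.
      a S / 2 ^ card S * ((\<Prod>i\<in>T. complex_of_real (y i)) * chi T z) * (\<Prod>i\<in>S - T. complex_of_real (xr i)))
      = a S / 2 ^ card S *
      (\<Sum>T\<in>Pow S. (\<Prod>i\<in>T. complex_of_real (y i * sg (z!i))) * (\<Prod>i\<in>S - T. complex_of_real (xr i)))"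
      by (simp add: sum_distrib_left chi_sg prod.distrib mult.assoc)
  qed
  also have "\<dots> = (\<Sum>S\<in>Pow {0..<m}. a S / 2 ^ card S *
      (\<Prod>i\<in>S. complex_of_real (y i * sg (z!i)) + complex_of_real (xr i)))"
  proof (intro sum.cong refl)
    fix S assume S: "S \<in> Pow {0..<m}"
    then have "finite S" using finite_subset by auto
    then show "a S / 2 ^ card S *
      (\<Sum>T\<in>Pow S. (\<Prod>i\<in>T. complex_of_real (y i * sg (z!i))) * (\<Prod>i\<in>S - T. complex_of_real (xr i)))
      = a S / 2 ^ card S * (\<Prod>i\<in>S. complex_of_real (y i * sg (z!i)) + complex_of_real (xr i))"
      by (simp add: prod_add)
  qed
  also have "\<dots> = evR a m (\<lambda>i. (xr i + y i * sg (z!i)) / 2)"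
    unfolding evR_def
  proof (intro sum.cong refl)
    fix S assume S: "S \<in> Pow {0..<m}"
    have "(\<Prod>i\<in>S. complex_of_real ((xr i + y i * sg (z!i)) / 2))
        = (\<Prod>i\<in>S. complex_of_real (y i * sg (z!i)) + complex_of_real (xr i)) / 2 ^ card S"
      by (simp add: prod_dividef add.commute)
    then show "a S / 2 ^ card S * (\<Prod>i\<in>S. complex_of_real (y i * sg (z!i)) + complex_of_real (xr i))
        = a S * (\<Prod>i\<in>S. complex_of_real ((xr i + y i * sg (z!i)) / 2))"
      by simp
  qed
  finally show ?thesis .
qed


lemma bfam_deg:
  assumes "\<forall>S. S \<subseteq> {0..<m} \<longrightarrow> card S \<noteq> k \<longrightarrow> a S = 0"
  shows "\<forall>T. T \<subseteq> {0..<m} \<longrightarrow> k < card T \<longrightarrow> bfam a m y xr T = 0"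
proof (intro allI impI)
  fix T assume T: "T \<subseteq> {0..<m}" "k < card T"
  show "bfam a m y xr T = 0" unfolding bfam_def
  proof (intro sum.neutral ballI)
    fix S assume "S \<in> {S\<in>Pow {0..<m}. T \<subseteq> S}"
    then have S: "S \<subseteq> {0..<m}" "T \<subseteq> S" by auto
    then have "card T \<le> card S" using finite_subset[OF S(1)] by (intro card_mono) auto
    then have "a S = 0" using assms S T by auto
    then show "a S / 2 ^ card S * (\<Prod>i\<in>T. complex_of_real (y i)) * (\<Prod>i\<in>S - T. complex_of_real (xr i)) = 0"
      by simp
  qed
qed

lemma bfam_supn:
  assumes "\<And>i. \<bar>xr i\<bar> \<le> 1" "\<And>i. \<bar>y i\<bar> \<le> 1"
  shows "supn (bfam a m y xr) m \<le> supn a m"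
proof (rule supn_le)
  fix z assume z: "z \<in> cube m"
  have "\<bar>(xr i + y i * sg (z!i)) / 2\<bar> \<le> 1" for i
  proof -
    have "\<bar>xr i + y i * sg (z!i)\<bar> \<le> \<bar>xr i\<bar> + \<bar>y i\<bar>" by (simp add: abs_mult order_trans[OF abs_triangle_ineq])
    then show ?thesis using assms[of i] by simp
  qed
  then show "cmod (ev (bfam a m y xr) m z) \<le> supn a m"
    unfolding bfam_ev[OF z] by (intro MA) auto
qed

lemma card1_Pow: "{T\<in>Pow {0..<m}. card T = 1} = (\<lambda>i. {i}) ` {0..<(m::nat)}"
  by (auto simp: card_1_singleton_iff)

lemma bfam_deg1:
  assumes hom: "\<forall>S. S \<subseteq> {0..<m} \<longrightarrow> card S \<noteq> k \<longrightarrow> a S = 0"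
    and xr: "\<And>i. xr i = sg (x!i)"
  shows "(\<Sum>T\<in>{T\<in>Pow {0..<m}. card T = 1}. bfam a m y xr T * chi T (replicate m True))
       = (\<Sum>t<m. complex_of_real (y t) * gder a m t x) / 2 ^ k"
proof -
  have inj: "inj_on (\<lambda>i. {i}) {0..<m}" by (auto simp: inj_on_def)
  have "(\<Sum>T\<in>{T\<in>Pow {0..<m}. card T = 1}. bfam a m y xr T * chi T (replicate m True))
      = (\<Sum>t\<in>{0..<m}. bfam a m y xr {t})"
    unfolding card1_Pow by (subst sum.reindex[OF inj]) (auto simp: chi_def)
  also have "\<dots> = (\<Sum>t\<in>{0..<m}. complex_of_real (y t) * gder a m t x / 2 ^ k)"
  proof (intro sum.cong refl)
    fix t assume t: "t \<in> {0..<m}"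
    have "bfam a m y xr {t} = (\<Sum>S\<in>{S\<in>Pow {0..<m}. t \<in> S}. complex_of_real (y t) * (a S * chi (S - {t}) x) / 2 ^ k)"
      unfolding bfam_def
    proof (intro sum.cong)
      fix S assume S: "S \<in> {S\<in>Pow {0..<m}. t \<in> S}"
      show "a S / 2 ^ card S * (\<Prod>i\<in>{t}. complex_of_real (y i)) * (\<Prod>i\<in>S - {t}. complex_of_real (xr i))
          = complex_of_real (y t) * (a S * chi (S - {t}) x) / 2 ^ k"
      proof (cases "a S = 0")
        case True then show ?thesis by simp
      next
        case False then have "card S = k" using hom S by auto
        then show ?thesis by (simp add: chi_sg xr mult_ac)
      qed
    qed auto
    also have "\<dots> = complex_of_real (y t) * gder a m t x / 2 ^ k"
      unfolding gder_def by (simp add: sum_distrib_left sum_divide_distrib)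
    finally show "bfam a m y xr {t} = complex_of_real (y t) * gder a m t x / 2 ^ k" .
  qed
  also have "\<dots> = (\<Sum>t<m. complex_of_real (y t) * gder a m t x) / 2 ^ k"
    by (simp add: sum_divide_distrib atLeast0LessThan)
  finally show ?thesis .
qed

lemma Dbound:
  "\<exists>D\<ge>0. \<forall>m a x. (\<forall>S. S \<subseteq> {0..<m} \<longrightarrow> card S \<noteq> k \<longrightarrow> a S = 0) \<longrightarrow> x \<in> cube m \<longrightarrow>
      (\<Sum>t<m. cmod (gder a m t x)) \<le> D * supn a m"
proof -
  obtain K where K0: "K \<ge> 0" and K: "\<forall>m b z j. (\<forall>S. S \<subseteq> {0..<m} \<longrightarrow> k < card S \<longrightarrow> b S = 0) \<longrightarrow> z \<in> cube m \<longrightarrow>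
      cmod (\<Sum>S\<in>{S\<in>Pow {0..<m}. card S = j}. b S * chi S z) \<le> K * supn b m"
    using HP[of k] by blast
  have main: "(\<Sum>t<m. cmod (gder a m t x)) \<le> (2 * 2 ^ k * K) * supn a m"
    if hom: "\<forall>S. S \<subseteq> {0..<m} \<longrightarrow> card S \<noteq> k \<longrightarrow> a S = 0" and x: "x \<in> cube m" for m a x
  proof -
    define xr where "xr i = sg (x!i)" for i
    have core: "cmod (\<Sum>t<m. complex_of_real (y t) * gder a m t x) \<le> 2 ^ k * K * supn a m"
      if y: "\<And>i. \<bar>y i\<bar> \<le> 1" for y
    proof -
      have z1: "replicate m True \<in> cube m" by (simp add: cube_def)
      have "cmod (\<Sum>t<m. complex_of_real (y t) * gder a m t x) / 2 ^ k
          = cmod (\<Sum>T\<in>{T\<in>Pow {0..<m}. card T = 1}. bfam a m y xr T * chi T (replicate m True))"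
        unfolding bfam_deg1[OF hom xr_def] by (simp add: norm_divide norm_power)
      also have "\<dots> \<le> K * supn (bfam a m y xr) m"
        using K bfam_deg[OF hom] z1 by blast
      also have "\<dots> \<le> K * supn a m"
        using K0 bfam_supn[of xr y a m] y by (intro mult_left_mono) (auto simp: xr_def)
      finally show ?thesis by (simp add: divide_le_eq mult.commute mult.left_commute)
    qed
    define z where "z t = gder a m t x" for t
    define y1 where "y1 t = (if Re (z t) \<ge> 0 then 1 else (-1::real))" for t
    define y2 where "y2 t = (if Im (z t) \<ge> 0 then 1 else (-1::real))" for t
    have "(\<Sum>t<m. cmod (z t)) \<le> (\<Sum>t<m. \<bar>Re (z t)\<bar> + \<bar>Im (z t)\<bar>)"
      by (intro sum_mono cmod_le)
    also have "\<dots> = (\<Sum>t<m. y1 t * Re (z t)) + (\<Sum>t<m. y2 t * Im (z t))"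
    proof -
      have "\<And>t. \<bar>Re (z t)\<bar> = y1 t * Re (z t)" "\<And>t. \<bar>Im (z t)\<bar> = y2 t * Im (z t)"
        by (auto simp: y1_def y2_def abs_if)
      then show ?thesis by (simp add: sum.distrib)
    qed
    also have "\<dots> = Re (\<Sum>t<m. complex_of_real (y1 t) * z t) + Im (\<Sum>t<m. complex_of_real (y2 t) * z t)"
      by (simp add: Re_sum Im_sum)
    also have "\<dots> \<le> cmod (\<Sum>t<m. complex_of_real (y1 t) * z t) + cmod (\<Sum>t<m. complex_of_real (y2 t) * z t)"
      by (intro add_mono complex_Re_le_cmod) (meson abs_Im_le_cmod abs_le_D1)
    also have "\<dots> \<le> 2 ^ k * K * supn a m + 2 ^ k * K * supn a m"
      unfolding z_def by (intro add_mono core) (auto simp: y1_def y2_def)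
    finally show ?thesis unfolding z_def by (simp add: mult_ac)
  qed
  show ?thesis using K0 main by (intro exI[of _ "2 * 2 ^ k * K"]) auto
qed

definition LS :: "nat \<Rightarrow> nat \<Rightarrow> nat list set" where
  "LS k m = {I. length I = k \<and> set I \<subseteq> {0..<m}}"

definition NB :: "(nat list \<Rightarrow> real) \<Rightarrow> nat \<Rightarrow> nat \<Rightarrow> nat \<Rightarrow> real" where
  "NB b k m j = (\<Sum>t<m. sqrt (\<Sum>I\<in>{I\<in>LS k m. I!j = t}. (b I)\<^sup>2))"

lemma finite_LS[simp]: "finite (LS k m)"
proof -
  have "LS k m = {xs. set xs \<subseteq> {0..<m} \<and> length xs = k}" unfolding LS_def by auto
  then show ?thesis using finite_lists_length_eq[of "{0..<m}" k] by simp
qed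

lemma sum_LS_Suc: "(\<Sum>J\<in>LS (Suc k) m. F J) = (\<Sum>i<m. \<Sum>I\<in>LS k m. F (i#I))"
proof -
  have inj: "inj_on (\<lambda>(i,I). i#I) ({0..<m} \<times> LS k m)" by (auto simp: inj_on_def)
  have "(\<Sum>J\<in>LS (Suc k) m. F J) = (\<Sum>p\<in>{0..<m} \<times> LS k m. F (fst p # snd p))"
    unfolding LS_def lists_Suc_eq by (subst sum.reindex[OF inj[unfolded LS_def]]) (simp add: case_prod_beta)
  also have "\<dots> = (\<Sum>i<m. \<Sum>I\<in>LS k m. F (i#I))"
    by (simp add: sum.cartesian_product case_prod_beta atLeast0LessThan)
  finally show ?thesis .
qed

lemma sum_LS_Suc_filter:
  "(\<Sum>J\<in>{J\<in>LS (Suc k) m. P J}. F J) = (\<Sum>i<m. \<Sum>I\<in>{I\<in>LS k m. P (i#I)}. F (i#I))"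
  by (simp add: sum.inter_filter sum_LS_Suc)

lemma sq_powr: "0 \<le> (x::real) \<Longrightarrow> (x\<^sup>2) powr a = x powr (2 * a)"
  by (cases "x = 0") (auto simp: powr_powr[symmetric] simp flip: powr_numeral)

lemma sum_sq_le_sq_sum:
  fixes x :: "nat \<Rightarrow> real"
  assumes "\<And>j. x j \<ge> 0"
  shows "(\<Sum>j<n. (x j)\<^sup>2) \<le> (\<Sum>j<n. x j)\<^sup>2"
proof (induction n)
  case 0 then show ?case by simp
next
  case (Suc n)
  have "0 \<le> 2 * x n * (\<Sum>j<n. x j)" using assms by (simp add: sum_nonneg)
  then show ?case using Suc by (simp add: power2_eq_square algebra_simps)
qed

lemma holder_interp:
  fixes \<beta> :: "'i \<Rightarrow> real" and k :: nat
  assumes "finite A" "\<And>I. \<beta> I \<ge> 0" "k \<ge> 1"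
  shows "(\<Sum>I\<in>A. \<beta> I powr (2 * (real k + 1) / (real k + 2)))
      \<le> (\<Sum>I\<in>A. (\<beta> I)\<^sup>2) powr (1 / (real k + 2)) * (\<Sum>I\<in>A. \<beta> I powr (2 * real k / (real k + 1))) powr ((real k + 1) / (real k + 2))"
proof -
  have e: "\<beta> I powr (2 * (real k + 1) / (real k + 2))
      = ((\<beta> I)\<^sup>2) powr (1 / (real k + 2)) * (\<beta> I powr (2 * real k / (real k + 1))) powr ((real k + 1) / (real k + 2))" for I
  proof -
    have "((\<beta> I)\<^sup>2) powr (1 / (real k + 2)) * (\<beta> I powr (2 * real k / (real k + 1))) powr ((real k + 1) / (real k + 2))
        = \<beta> I powr (2 * (1 / (real k + 2))) * \<beta> I powr (2 * real k / (real k + 1) * ((real k + 1) / (real k + 2)))"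
      using assms by (simp add: sq_powr powr_powr)
    also have "\<dots> = \<beta> I powr (2 * (1 / (real k + 2)) + 2 * real k / (real k + 1) * ((real k + 1) / (real k + 2)))"
      by (simp add: powr_add)
    also have "2 * (1 / (real k + 2)) + 2 * real k / (real k + 1) * ((real k + 1) / (real k + 2)) = 2 * (real k + 1) / (real k + 2)"
    proof -
      have nz: "real k + 1 \<noteq> 0" "real k + 2 \<noteq> 0" by linarith+
      show ?thesis using nz by (simp add: divide_simps) (simp add: algebra_simps)
    qed
    finally show ?thesis by simp
  qed
  show ?thesis unfolding e
    by (rule weighted_holder) (use assms in \<open>auto simp: field_simps\<close>)
qed


lemma sq_sqrt_sumsq[simp]: "(sqrt (\<Sum>x\<in>A. (f x)\<^sup>2))\<^sup>2 = (\<Sum>x\<in>A. ((f x)::real)\<^sup>2)"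
  by (simp add: sum_nonneg)

lemma NB_nonneg: "NB b k m j \<ge> 0"
  unfolding NB_def by (auto intro!: sum_nonneg)

lemma NB_Suc: "NB b (Suc k) m (Suc j) = (\<Sum>t<m. sqrt (\<Sum>i<m. \<Sum>I\<in>{I\<in>LS k m. I!j = t}. (b (i#I))\<^sup>2))"
  unfolding NB_def sum_LS_Suc_filter by simp

lemma NB_0: "NB b (Suc k) m 0 = (\<Sum>t<m. sqrt (\<Sum>I\<in>LS k m. (b (t#I))\<^sup>2))"
  unfolding NB_def sum_LS_Suc_filter
proof (intro sum.cong refl arg_cong[where f=sqrt])
  fix t assume t: "t \<in> {..<m}"
  have "(\<Sum>i<m. \<Sum>I\<in>{I \<in> LS k m. (i # I) ! 0 = t}. (b (i # I))\<^sup>2)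
      = (\<Sum>i<m. if i = t then (\<Sum>I\<in>LS k m. (b (t # I))\<^sup>2) else 0)"
    by (intro sum.cong refl) auto
  also have "\<dots> = (\<Sum>I\<in>LS k m. (b (t # I))\<^sup>2)" using t by (simp add: sum.delta)
  finally show "(\<Sum>i<m. \<Sum>I\<in>{I \<in> LS k m. (i # I) ! 0 = t}. (b (i # I))\<^sup>2) = (\<Sum>I\<in>LS k m. (b (t # I))\<^sup>2)" .
qed

lemma minkowski_NB:
  "(\<Sum>i<m. (NB (\<lambda>I. b (i#I)) k m j)\<^sup>2) \<le> (NB b (Suc k) m (Suc j))\<^sup>2"
proof -
  define v where "v t i = sqrt (\<Sum>I\<in>{I\<in>LS k m. I!j = t}. (b (i#I))\<^sup>2)" for t i
  have v0: "v t i \<ge> 0" for t i unfolding v_def by (auto intro!: sum_nonneg)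
  have "L2_set (\<lambda>i. \<Sum>t<m. v t i) {..<m} \<le> (\<Sum>t<m. L2_set (v t) {..<m})"
    by (rule L2_set_sum_le) simp
  also have "\<dots> = NB b (Suc k) m (Suc j)"
    unfolding NB_Suc L2_set_def v_def by (intro sum.cong refl) (auto intro!: sum_nonneg)
  finally have L: "L2_set (\<lambda>i. \<Sum>t<m. v t i) {..<m} \<le> NB b (Suc k) m (Suc j)" .
  have "(\<Sum>i<m. (NB (\<lambda>I. b (i#I)) k m j)\<^sup>2) = (L2_set (\<lambda>i. \<Sum>t<m. v t i) {..<m})\<^sup>2"
    unfolding L2_set_def NB_def v_def by (auto intro!: sum_nonneg)
  also have "\<dots> \<le> (NB b (Suc k) m (Suc j))\<^sup>2" using L by (intro power_mono) auto
  finally show ?thesis .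
qed

lemma exps:
  fixes k :: nat assumes "k \<ge> 1"
  shows "2 * (1 / (real k + 2)) = 2 / (real k + 2)"
    and "(real k + 1) / real k * (real k / (real k + 2)) = (real k + 1) / (real k + 2)"
    and "2 * real k / (real k + 1) * ((real k + 1) / real k) = 2"
    and "2 / (real k + 2) + 2 * (real k / (real k + 2)) = 2 * (real k + 1) / (real k + 2)"
    and "2 / (real k + 2) + real k / (real k + 2) = 1"
proof -
  have nz: "real k + 1 \<noteq> 0" "real k + 2 \<noteq> 0" "real k \<noteq> 0" using assms by auto
  show "2 * (1 / (real k + 2)) = 2 / (real k + 2)" by simp
  show "(real k + 1) / real k * (real k / (real k + 2)) = (real k + 1) / (real k + 2)"
    using nz by (simp add: divide_simps; (simp add: algebra_simps)?)
  show "2 * real k / (real k + 1) * ((real k + 1) / real k) = 2"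
    using nz by (simp add: divide_simps; (simp add: algebra_simps)?)
  show "2 / (real k + 2) + 2 * (real k / (real k + 2)) = 2 * (real k + 1) / (real k + 2)"
    using nz by (simp add: divide_simps; (simp add: algebra_simps)?)
  show "2 / (real k + 2) + real k / (real k + 2) = 1"
    using nz by (simp add: divide_simps; (simp add: algebra_simps)?)
qed

lemma blei_step:
  fixes k :: nat and C :: real
  assumes k1: "k \<ge> 1" and C0: "C \<ge> 0"
    and IH: "\<forall>m b. (\<forall>I. b I \<ge> 0) \<longrightarrow> (\<Sum>I\<in>LS k m. b I powr (2 * real k / (real k + 1)))
          \<le> C * (\<Sum>j<k. NB b k m j) powr (2 * real k / (real k + 1))"
  shows "\<exists>C'\<ge>0. \<forall>m b. (\<forall>I. b I \<ge> 0) \<longrightarrow> (\<Sum>I\<in>LS (Suc k) m. b I powr (2 * (real k + 1) / (real k + 2)))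
          \<le> C' * (\<Sum>j<Suc k. NB b (Suc k) m j) powr (2 * (real k + 1) / (real k + 2))"
proof -
  define p where "p = 2 * real k / (real k + 1)"
  define q where "q = 2 * (real k + 1) / (real k + 2)"
  define r1 where "r1 = 1 / (real k + 2)"
  define r2 where "r2 = (real k + 1) / (real k + 2)"
  define \<alpha> where "\<alpha> = 2 / (real k + 2)"
  define \<beta> where "\<beta> = real k / (real k + 2)"
  define e where "e = (real k + 1) / real k"
  note ex = exps[OF k1, folded p_def q_def r1_def r2_def \<alpha>_def \<beta>_def e_def]
  have pos: "\<alpha> > 0" "\<beta> > 0" "e \<ge> 0" "r1 \<ge> 0" "r2 \<ge> 0" "p \<ge> 0"
    unfolding \<alpha>_def \<beta>_def e_def r1_def r2_def p_def using k1 by auto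
  define C' where "C' = (C powr e * real k) powr \<beta>"
  have "(\<Sum>I\<in>LS (Suc k) m. b I powr q) \<le> C' * (\<Sum>j<Suc k. NB b (Suc k) m j) powr q"
    if b0: "\<forall>I. b I \<ge> 0" for m b
  proof -
    define A where "A i = sqrt (\<Sum>I\<in>LS k m. (b (i#I))\<^sup>2)" for i
    define P where "P i = (\<Sum>I\<in>LS k m. b (i#I) powr p)" for i
    define T where "T i = (\<Sum>j<k. NB (\<lambda>I. b (i#I)) k m j)" for i
    define N where "N = (\<Sum>j<Suc k. NB b (Suc k) m j)"
    have A0: "A i \<ge> 0" for i unfolding A_def by (auto intro!: sum_nonneg)
    have P0: "P i \<ge> 0" for i unfolding P_def by (simp add: sum_nonneg)
    have T0: "T i \<ge> 0" for i unfolding T_def by (simp add: sum_nonneg NB_nonneg)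
    have N0: "N \<ge> 0" unfolding N_def by (simp add: sum_nonneg NB_nonneg)
    have NS: "N = NB b (Suc k) m 0 + (\<Sum>j<k. NB b (Suc k) m (Suc j))"
      unfolding N_def sum.lessThan_Suc_shift by simp
    have sumA: "(\<Sum>i<m. A i) = NB b (Suc k) m 0" unfolding NB_0 A_def ..
    have sumA_le: "(\<Sum>i<m. A i) \<le> N" unfolding NS sumA by (simp add: sum_nonneg NB_nonneg)
    have "(\<Sum>I\<in>LS (Suc k) m. b I powr q) = (\<Sum>i<m. \<Sum>I\<in>LS k m. b (i#I) powr q)"
      by (rule sum_LS_Suc)
    also have "\<dots> \<le> (\<Sum>i<m. (\<Sum>I\<in>LS k m. (b (i#I))\<^sup>2) powr r1 * P i powr r2)"
      unfolding q_def r1_def P_def p_def r2_def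
      by (intro sum_mono holder_interp) (use b0 k1 in auto)
    also have "\<dots> = (\<Sum>i<m. A i powr \<alpha> * (P i powr e) powr \<beta>)"
    proof (intro sum.cong refl)
      fix i
      have "(\<Sum>I\<in>LS k m. (b (i#I))\<^sup>2) = (A i)\<^sup>2" unfolding A_def by (auto intro!: sum_nonneg)
      then show "(\<Sum>I\<in>LS k m. (b (i#I))\<^sup>2) powr r1 * P i powr r2 = A i powr \<alpha> * (P i powr e) powr \<beta>"
        using A0 ex by (simp add: sq_powr powr_powr)
    qed
    also have "\<dots> \<le> (\<Sum>i<m. A i) powr \<alpha> * (\<Sum>i<m. P i powr e) powr \<beta>"
      by (rule weighted_holder) (use pos ex A0 in auto)
    also have "\<dots> \<le> N powr \<alpha> * ((C powr e * real k) * N\<^sup>2) powr \<beta>"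
    proof (intro mult_mono powr_mono2)
      show "(\<Sum>i<m. A i) \<le> N" by (rule sumA_le)
      have "P i powr e \<le> (C powr e * real k) * (\<Sum>j<k. (NB (\<lambda>I. b (i#I)) k m j)\<^sup>2)" for i
      proof -
        have "P i \<le> C * T i powr p" using IH b0 unfolding P_def T_def p_def by auto
        then have "P i powr e \<le> (C * T i powr p) powr e" using P0 pos by (intro powr_mono2) auto
        also have "\<dots> = C powr e * (T i)\<^sup>2" using ex T0 by (simp add: powr_mult powr_powr)
        also have "\<dots> \<le> C powr e * ((\<Sum>j<k. (NB (\<lambda>I. b (i#I)) k m j)\<^sup>2) * real k)"
          unfolding T_def using sum_squared_le_sum_of_squares[of "\<lambda>j. NB (\<lambda>I. b (i#I)) k m j" "{..<k}"]
          by (intro mult_left_mono) auto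
        finally show ?thesis by (simp add: mult_ac)
      qed
      then have "(\<Sum>i<m. P i powr e) \<le> (\<Sum>i<m. (C powr e * real k) * (\<Sum>j<k. (NB (\<lambda>I. b (i#I)) k m j)\<^sup>2))"
        by (intro sum_mono)
      also have "\<dots> = (C powr e * real k) * (\<Sum>j<k. \<Sum>i<m. (NB (\<lambda>I. b (i#I)) k m j)\<^sup>2)"
        by (simp add: sum_distrib_left sum.swap[of _ "{..<m}"])
      also have "\<dots> \<le> (C powr e * real k) * (\<Sum>j<k. (NB b (Suc k) m (Suc j))\<^sup>2)"
        by (intro mult_left_mono sum_mono minkowski_NB) auto
      also have "\<dots> \<le> (C powr e * real k) * (\<Sum>j<k. NB b (Suc k) m (Suc j))\<^sup>2"
        by (intro mult_left_mono sum_sq_le_sq_sum NB_nonneg) auto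
      also have "\<dots> \<le> (C powr e * real k) * N\<^sup>2"
        unfolding NS by (intro mult_left_mono power_mono) (auto simp: sum_nonneg NB_nonneg)
      finally show "(\<Sum>i<m. P i powr e) \<le> (C powr e * real k) * N\<^sup>2" .
    qed (use pos A0 in \<open>auto intro: sum_nonneg\<close>)
    also have "\<dots> = C' * N powr q"
    proof -
      have "((C powr e * real k) * N\<^sup>2) powr \<beta> = C' * N powr (2 * \<beta>)"
        unfolding C'_def using N0 by (simp add: powr_mult sq_powr)
      then have "N powr \<alpha> * ((C powr e * real k) * N\<^sup>2) powr \<beta> = C' * (N powr \<alpha> * N powr (2 * \<beta>))"
        by simp
      also have "N powr \<alpha> * N powr (2 * \<beta>) = N powr q"
        using ex by (simp flip: powr_add)
      finally show ?thesis .
    qed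
    finally show ?thesis unfolding N_def .
  qed
  moreover have "C' \<ge> 0" unfolding C'_def by simp
  ultimately show ?thesis unfolding q_def by blast
qed

lemma blei:
  assumes "k \<ge> 1"
  shows "\<exists>C\<ge>0. \<forall>m b. (\<forall>I. b I \<ge> 0) \<longrightarrow> (\<Sum>I\<in>LS k m. b I powr (2 * real k / (real k + 1)))
          \<le> C * (\<Sum>j<k. NB b k m j) powr (2 * real k / (real k + 1))"
  using assms
proof (induction k rule: nat_induct_at_least)
  case base
  have "(\<Sum>I\<in>LS 1 m. b I powr (2 * real 1 / (real 1 + 1))) \<le> 1 * (\<Sum>j<1. NB b 1 m j) powr (2 * real 1 / (real 1 + 1))"
    if b0: "\<forall>I. b I \<ge> 0" for m b
  proof -
    have L0: "LS 0 m = {[]}" unfolding LS_def by auto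
    have "(\<Sum>I\<in>LS 1 m. b I powr (2 * real 1 / (real 1 + 1))) = (\<Sum>i<m. b [i])"
      using sum_LS_Suc[of "\<lambda>I. b I powr 1" 0 m] b0 by (simp add: L0)
    also have "\<dots> = NB b 1 m 0"
      using NB_0[of b 0 m] b0 by (simp add: L0)
    finally show ?thesis using NB_nonneg[of b 1 m 0] by simp
  qed
  then show ?case by (intro exI[of _ 1]) auto
next
  case (Suc k)
  have k1: "1 \<le> k" using Suc by simp
  from Suc obtain C where C0: "C \<ge> 0" and CI: "\<forall>m b. (\<forall>I. b I \<ge> 0) \<longrightarrow> (\<Sum>I\<in>LS k m. b I powr (2 * real k / (real k + 1)))
          \<le> C * (\<Sum>j<k. NB b k m j) powr (2 * real k / (real k + 1))" by blast
  have e: "2 * real (Suc k) / (real (Suc k) + 1) = 2 * (real k + 1) / (real k + 2)"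
    by (simp only: of_nat_Suc) (simp add: algebra_simps)
  from blei_step[OF k1 C0 CI] show ?case
    unfolding e by blast
qed

lemma card_cube: "card (cube m) = 2 ^ m"
proof -
  have "cube m = {xs. set xs \<subseteq> (UNIV::bool set) \<and> length xs = m}" unfolding cube_def by auto
  then show ?thesis using card_lists_length_eq[of "UNIV::bool set" m] by (simp add: card_UNIV_bool)
qed

lemma shift_sum:
  assumes "t < (m::nat)"
  shows "(\<Sum>S\<in>{S\<in>Pow {0..<m}. t \<in> S}. F S) = (\<Sum>T\<in>{T\<in>Pow {0..<m}. t \<notin> T}. F (insert t T))"
proof -
  have inj: "inj_on (insert t) {T\<in>Pow {0..<m}. t \<notin> T}"
    by (auto simp: inj_on_def)
  have img: "insert t ` {T\<in>Pow {0..<m}. t \<notin> T} = {S\<in>Pow {0..<m}. t \<in> S}"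
  proof (intro set_eqI iffI)
    fix S assume "S \<in> {S\<in>Pow {0..<m}. t \<in> S}"
    then have "S = insert t (S - {t})" "S - {t} \<in> {T\<in>Pow {0..<m}. t \<notin> T}" by auto
    then show "S \<in> insert t ` {T\<in>Pow {0..<m}. t \<notin> T}" by (metis image_eqI)
  qed (use assms in auto)
  show ?thesis unfolding img[symmetric] sum.reindex[OF inj] by (simp add: o_def)
qed

definition ash :: "(nat set \<Rightarrow> complex) \<Rightarrow> nat \<Rightarrow> nat set \<Rightarrow> complex" where
  "ash a t T = (if t \<notin> T then a (insert t T) else 0)"

lemma sum_ash:
  "(\<Sum>T\<in>Pow {0..<m}. F (ash a t T) T) = (\<Sum>T\<in>{T\<in>Pow {0..<m}. t \<notin> T}. F (a (insert t T)) T)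
     + (\<Sum>T\<in>{T\<in>Pow {0..<m}. t \<in> T}. F 0 T)"
proof -
  have "(\<Sum>T\<in>Pow {0..<m}. F (ash a t T) T) = (\<Sum>T\<in>{T\<in>Pow {0..<m}. t \<notin> T}. F (ash a t T) T)
     + (\<Sum>T\<in>{T\<in>Pow {0..<m}. t \<in> T}. F (ash a t T) T)"
    by (subst sum.union_disjoint[symmetric]) (auto intro: sum.cong)
  also have "\<dots> = (\<Sum>T\<in>{T\<in>Pow {0..<m}. t \<notin> T}. F (a (insert t T)) T)
     + (\<Sum>T\<in>{T\<in>Pow {0..<m}. t \<in> T}. F 0 T)"
    unfolding ash_def by (intro arg_cong2[where f="(+)"] sum.cong) auto
  finally show ?thesis .
qed

lemma gder_ev:
  assumes "t < m"
  shows "gder a m t x = ev (ash a t) m x"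
proof -
  have "gder a m t x = (\<Sum>T\<in>{T\<in>Pow {0..<m}. t \<notin> T}. a (insert t T) * chi (insert t T - {t}) x)"
    unfolding gder_def by (rule shift_sum[OF assms])
  also have "\<dots> = (\<Sum>T\<in>{T\<in>Pow {0..<m}. t \<notin> T}. a (insert t T) * chi T x)"
    by (intro sum.cong refl) auto
  also have "\<dots> = ev (ash a t) m x"
    unfolding ev_def using sum_ash[of "\<lambda>c T. c * chi T x" a t m] by simp
  finally show ?thesis .
qed

lemma ash_sq:
  assumes "t < m"
  shows "(\<Sum>T\<in>Pow {0..<m}. (cmod (ash a t T))\<^sup>2) = (\<Sum>S\<in>{S\<in>Pow {0..<m}. t \<in> S}. (cmod (a S))\<^sup>2)"
  using sum_ash[of "\<lambda>c T. (cmod c)\<^sup>2" a t m] shift_sum[OF assms, of "\<lambda>S. (cmod (a S))\<^sup>2"] by simp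

lemma ash_deg:
  assumes "\<forall>S. S \<subseteq> {0..<m} \<longrightarrow> card S \<noteq> k \<longrightarrow> a S = 0" "t < m"
  shows "\<forall>T. T \<subseteq> {0..<m} \<longrightarrow> k < card T \<longrightarrow> ash a t T = 0"
proof (intro allI impI)
  fix T assume T: "T \<subseteq> {0..<m}" "k < card T"
  show "ash a t T = 0"
  proof (cases "t \<in> T")
    case False
    have "finite T" using T finite_subset by auto
    then have "card (insert t T) = Suc (card T)" using False by simp
    moreover have "insert t T \<subseteq> {0..<m}" using T assms by auto
    ultimately show ?thesis using assms T False unfolding ash_def by auto
  qed (simp add: ash_def)
qed

lemma W_bound:
  assumes hom: "\<forall>S. S \<subseteq> {0..<m} \<longrightarrow> card S \<noteq> k \<longrightarrow> a S = 0"
    and Dh: "\<And>x. x \<in> cube m \<Longrightarrow> (\<Sum>t<m. cmod (gder a m t x)) \<le> D * supn a m"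
  shows "(\<Sum>t<m. sqrt (\<Sum>S\<in>{S\<in>Pow {0..<m}. t \<in> S}. (cmod (a S))\<^sup>2)) \<le> 3 ^ k * D * supn a m"
proof -
  have wt: "2 ^ m * sqrt (\<Sum>S\<in>{S\<in>Pow {0..<m}. t \<in> S}. (cmod (a S))\<^sup>2) \<le> 3 ^ k * (\<Sum>x\<in>cube m. cmod (gder a m t x))"
    if t: "t < m" for t
  proof -
    define w2 where "w2 = (\<Sum>S\<in>{S\<in>Pow {0..<m}. t \<in> S}. (cmod (a S))\<^sup>2)"
    define G1 where "G1 = (\<Sum>x\<in>cube m. cmod (gder a m t x))"
    have w20: "w2 \<ge> 0" unfolding w2_def by (auto intro!: sum_nonneg)
    have G10: "G1 \<ge> 0" unfolding G1_def by (auto intro!: sum_nonneg)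
    have par: "(\<Sum>x\<in>cube m. (cmod (gder a m t x))\<^sup>2) = 2 ^ m * w2"
      unfolding gder_ev[OF t] parseval ash_sq[OF t] w2_def ..
    have "2 ^ m * (2 ^ m * w2) \<le> 9 ^ k * G1\<^sup>2"
      using khintchine[OF ash_deg[OF hom t]] unfolding G1_def gder_ev[OF t] par[unfolded gder_ev[OF t]] .
    moreover have "(2 ^ m * sqrt w2)\<^sup>2 = 2 ^ m * (2 ^ m * w2)"
      using w20 by (simp add: power2_eq_square algebra_simps)
    moreover have "(9::real) ^ k = 3 ^ k * 3 ^ k" by (simp flip: power_mult_distrib)
    then have "(3 ^ k * G1)\<^sup>2 = 9 ^ k * G1\<^sup>2" by (simp add: power2_eq_square)
    ultimately have "(2 ^ m * sqrt w2)\<^sup>2 \<le> (3 ^ k * G1)\<^sup>2" by simp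
    then have "2 ^ m * sqrt w2 \<le> 3 ^ k * G1"
      by (rule power2_le_imp_le) (simp add: G10)
    then show ?thesis unfolding w2_def G1_def .
  qed
  have "2 ^ m * (\<Sum>t<m. sqrt (\<Sum>S\<in>{S\<in>Pow {0..<m}. t \<in> S}. (cmod (a S))\<^sup>2))
      \<le> (\<Sum>t<m. 3 ^ k * (\<Sum>x\<in>cube m. cmod (gder a m t x)))"
  proof -
    have "(\<Sum>t<m. 2 ^ m * sqrt (\<Sum>S\<in>{S\<in>Pow {0..<m}. t \<in> S}. (cmod (a S))\<^sup>2))
      \<le> (\<Sum>t<m. 3 ^ k * (\<Sum>x\<in>cube m. cmod (gder a m t x)))"
      by (intro sum_mono wt) auto
    then show ?thesis by (simp add: sum_distrib_left)
  qed
  also have "\<dots> = 3 ^ k * (\<Sum>t<m. \<Sum>x\<in>cube m. cmod (gder a m t x))"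
    by (simp add: sum_distrib_left)
  also have "\<dots> = 3 ^ k * (\<Sum>x\<in>cube m. \<Sum>t<m. cmod (gder a m t x))"
    by (subst sum.swap) (rule refl)
  also have "\<dots> \<le> 3 ^ k * (\<Sum>x\<in>cube m. D * supn a m)"
    by (intro mult_left_mono sum_mono Dh) auto
  also have "\<dots> = 2 ^ m * (3 ^ k * D * supn a m)"
    by (simp add: card_cube)
  finally show ?thesis by simp
qed


lemma transfer1:
  fixes a :: "nat set \<Rightarrow> complex" and p :: real
  shows "(\<Sum>S\<in>{S\<in>Pow {0..<m}. card S = k}. cmod (a S) powr p) \<le> (\<Sum>I\<in>LS k m. cmod (a (set I)) powr p)"
proof -
  define X where "X = {S\<in>Pow {0..<m}. card S = k}"
  have fin: "\<And>S. S \<in> X \<Longrightarrow> finite S" unfolding X_def using finite_subset by auto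
  have inj: "inj_on sorted_list_of_set X"
    by (intro inj_onI) (metis fin sorted_list_of_set.set_sorted_key_list_of_set)
  have sub: "sorted_list_of_set ` X \<subseteq> LS k m"
  proof
    fix I assume "I \<in> sorted_list_of_set ` X"
    then obtain S where S: "S \<in> X" "I = sorted_list_of_set S" by auto
    then show "I \<in> LS k m" using fin[OF S(1)] S unfolding X_def LS_def by auto
  qed
  have "(\<Sum>S\<in>X. cmod (a S) powr p) = (\<Sum>I\<in>sorted_list_of_set ` X. cmod (a (set I)) powr p)"
    by (subst sum.reindex[OF inj]) (auto intro!: sum.cong simp: fin)
  also have "\<dots> \<le> (\<Sum>I\<in>LS k m. cmod (a (set I)) powr p)"
    by (intro sum_mono2 sub) auto
  finally show ?thesis unfolding X_def .
qed

lemma transfer2: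
  fixes a :: "nat set \<Rightarrow> complex"
  assumes hom: "\<forall>S. S \<subseteq> {0..<m} \<longrightarrow> card S \<noteq> k \<longrightarrow> a S = 0" and j: "j < k"
  shows "(\<Sum>I\<in>{I\<in>LS k m. I!j = t}. (cmod (a (set I)))\<^sup>2) \<le> real k ^ k * (\<Sum>S\<in>{S\<in>Pow {0..<m}. t \<in> S}. (cmod (a S))\<^sup>2)"
proof -
  define X where "X = {I\<in>LS k m. I!j = t}"
  define Y where "Y = {S\<in>Pow {0..<m}. t \<in> S}"
  have finX: "finite X" unfolding X_def by simp
  have finY: "finite Y" unfolding Y_def by simp
  have XY: "set ` X \<subseteq> Y" unfolding X_def Y_def LS_def using j by auto
  have "(\<Sum>I\<in>X. (cmod (a (set I)))\<^sup>2) = (\<Sum>S\<in>Y. \<Sum>I\<in>{I. I \<in> X \<and> set I = S}. (cmod (a (set I)))\<^sup>2)"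
    by (rule sum.group[symmetric, OF finX finY XY])
  also have "\<dots> \<le> (\<Sum>S\<in>Y. real k ^ k * (cmod (a S))\<^sup>2)"
  proof (intro sum_mono)
    fix S assume S: "S \<in> Y"
    have "(\<Sum>I\<in>{I. I \<in> X \<and> set I = S}. (cmod (a (set I)))\<^sup>2) = real (card {I. I \<in> X \<and> set I = S}) * (cmod (a S))\<^sup>2"
      by simp
    also have "\<dots> \<le> real k ^ k * (cmod (a S))\<^sup>2"
    proof (cases "a S = 0")
      case False
      then have cS: "card S = k" using hom S unfolding Y_def by auto
      have finS: "finite S" using S finite_subset unfolding Y_def by auto
      have "{I. I \<in> X \<and> set I = S} \<subseteq> {xs. set xs \<subseteq> S \<and> length xs = k}"
        unfolding X_def LS_def by auto
      then have "card {I. I \<in> X \<and> set I = S} \<le> card {xs. set xs \<subseteq> S \<and> length xs = k}"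
        by (intro card_mono) (auto intro: finite_lists_length_eq[OF finS])
      also have "\<dots> = k ^ k" using card_lists_length_eq[OF finS] cS by simp
      finally have "real (card {I. I \<in> X \<and> set I = S}) \<le> real k ^ k"
        by (metis of_nat_le_iff of_nat_power)
      then show ?thesis by (intro mult_right_mono) auto
    qed simp
    finally show "(\<Sum>I\<in>{I. I \<in> X \<and> set I = S}. (cmod (a (set I)))\<^sup>2) \<le> real k ^ k * (cmod (a S))\<^sup>2" .
  qed
  also have "\<dots> = real k ^ k * (\<Sum>S\<in>Y. (cmod (a S))\<^sup>2)" by (simp add: sum_distrib_left)
  finally show ?thesis unfolding X_def Y_def .
qed

lemma NB_transfer:
  fixes a :: "nat set \<Rightarrow> complex"
  assumes hom: "\<forall>S. S \<subseteq> {0..<m} \<longrightarrow> card S \<noteq> k \<longrightarrow> a S = 0"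
  shows "(\<Sum>j<k. NB (\<lambda>I. cmod (a (set I))) k m j)
      \<le> real k * sqrt (real k ^ k) * (\<Sum>t<m. sqrt (\<Sum>S\<in>{S\<in>Pow {0..<m}. t \<in> S}. (cmod (a S))\<^sup>2))"
proof -
  have "NB (\<lambda>I. cmod (a (set I))) k m j \<le> sqrt (real k ^ k) * (\<Sum>t<m. sqrt (\<Sum>S\<in>{S\<in>Pow {0..<m}. t \<in> S}. (cmod (a S))\<^sup>2))"
    if j: "j < k" for j
  proof -
    have "NB (\<lambda>I. cmod (a (set I))) k m j \<le> (\<Sum>t<m. sqrt (real k ^ k * (\<Sum>S\<in>{S\<in>Pow {0..<m}. t \<in> S}. (cmod (a S))\<^sup>2)))"
      unfolding NB_def by (intro sum_mono real_sqrt_le_mono transfer2[OF hom j])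
    also have "\<dots> = sqrt (real k ^ k) * (\<Sum>t<m. sqrt (\<Sum>S\<in>{S\<in>Pow {0..<m}. t \<in> S}. (cmod (a S))\<^sup>2))"
      by (simp add: real_sqrt_mult flip: sum_distrib_left)
    finally show ?thesis .
  qed
  then have "(\<Sum>j<k. NB (\<lambda>I. cmod (a (set I))) k m j) \<le> (\<Sum>j<k. sqrt (real k ^ k) * (\<Sum>t<m. sqrt (\<Sum>S\<in>{S\<in>Pow {0..<m}. t \<in> S}. (cmod (a S))\<^sup>2)))"
    by (intro sum_mono) auto
  then show ?thesis by (simp add: mult.assoc)
qed

lemma HB:
  assumes k1: "k \<ge> 1"
  shows "\<exists>H\<ge>0. \<forall>m a. (\<forall>S. S \<subseteq> {0..<m} \<longrightarrow> card S \<noteq> k \<longrightarrow> a S = 0) \<longrightarrow>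
     (\<Sum>S\<in>{S\<in>Pow {0..<m}. card S = k}. cmod (a S) powr (2 * real k / (real k + 1)))
       \<le> (H * supn a m) powr (2 * real k / (real k + 1))"
proof -
  define p where "p = 2 * real k / (real k + 1)"
  have p0: "p > 0" unfolding p_def using k1 by auto
  obtain CB where CB0: "CB \<ge> 0" and CB: "\<forall>m b. (\<forall>I. b I \<ge> 0) \<longrightarrow> (\<Sum>I\<in>LS k m. b I powr p)
          \<le> CB * (\<Sum>j<k. NB b k m j) powr p"
    using blei[OF k1] unfolding p_def by blast
  obtain D where D0: "D \<ge> 0" and D: "\<forall>m a x. (\<forall>S. S \<subseteq> {0..<m} \<longrightarrow> card S \<noteq> k \<longrightarrow> a S = 0) \<longrightarrow> x \<in> cube m \<longrightarrow>
      (\<Sum>t<m. cmod (gder a m t x)) \<le> D * supn a m"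
    using Dbound[of k] by blast
  define H where "H = CB powr (1 / p) * (real k * sqrt (real k ^ k) * (3 ^ k * D))"
  have H0: "H \<ge> 0" unfolding H_def using D0 by auto
  have "(\<Sum>S\<in>{S\<in>Pow {0..<m}. card S = k}. cmod (a S) powr p) \<le> (H * supn a m) powr p"
    if hom: "\<forall>S. S \<subseteq> {0..<m} \<longrightarrow> card S \<noteq> k \<longrightarrow> a S = 0" for m a
  proof -
    define W where "W = (\<Sum>t<m. sqrt (\<Sum>S\<in>{S\<in>Pow {0..<m}. t \<in> S}. (cmod (a S))\<^sup>2))"
    have "(\<Sum>S\<in>{S\<in>Pow {0..<m}. card S = k}. cmod (a S) powr p) \<le> (\<Sum>I\<in>LS k m. cmod (a (set I)) powr p)"
      by (rule transfer1)
    also have "\<dots> \<le> CB * (\<Sum>j<k. NB (\<lambda>I. cmod (a (set I))) k m j) powr p"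
      using CB by auto
    also have "\<dots> \<le> CB * (real k * sqrt (real k ^ k) * W) powr p"
      unfolding W_def using p0 CB0
      by (intro mult_left_mono powr_mono2 NB_transfer[OF hom]) (auto intro!: sum_nonneg NB_nonneg)
    also have "\<dots> \<le> CB * (real k * sqrt (real k ^ k) * (3 ^ k * D * supn a m)) powr p"
    proof -
      have "W \<le> 3 ^ k * D * supn a m" unfolding W_def
        by (rule W_bound[OF hom]) (use D hom in auto)
      moreover have "W \<ge> 0" unfolding W_def by (auto intro!: sum_nonneg)
      ultimately show ?thesis using p0 CB0
        by (intro mult_left_mono powr_mono2 mult_left_mono) auto
    qed
    also have "\<dots> = (H * supn a m) powr p"
    proof -
      have "(CB powr (1 / p)) powr p = CB" using p0 CB0 by (simp add: powr_powr)
      then show ?thesis unfolding H_def using supn_nonneg[of a m] D0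
        by (simp add: powr_mult mult_ac)
    qed
    finally show ?thesis .
  qed
  then show ?thesis using H0 unfolding p_def by blast
qed

lemma lp_mono:
  fixes f :: "'i \<Rightarrow> real"
  assumes "finite A" "\<And>x. f x \<ge> 0" "0 < p" "p \<le> q"
  shows "(\<Sum>x\<in>A. f x powr q) \<le> (\<Sum>x\<in>A. f x powr p) powr (q / p)"
proof -
  define N where "N = (\<Sum>x\<in>A. f x powr p)"
  have N0: "N \<ge> 0" unfolding N_def by (auto intro!: sum_nonneg)
  have fle: "f x powr (q - p) \<le> N powr ((q - p) / p)" if x: "x \<in> A" for x
  proof -
    have "f x powr p \<le> N" unfolding N_def using x assms by (intro member_le_sum) auto
    then have "(f x powr p) powr (1 / p) \<le> N powr (1 / p)" using assms by (intro powr_mono2) auto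
    then have "f x \<le> N powr (1 / p)" using assms by (simp add: powr_powr)
    then have "f x powr (q - p) \<le> (N powr (1 / p)) powr (q - p)" using assms by (intro powr_mono2) auto
    then show ?thesis by (simp add: powr_powr)
  qed
  have "(\<Sum>x\<in>A. f x powr q) = (\<Sum>x\<in>A. f x powr p * f x powr (q - p))"
    by (intro sum.cong refl) (simp flip: powr_add)
  also have "\<dots> \<le> (\<Sum>x\<in>A. f x powr p * N powr ((q - p) / p))"
    by (intro sum_mono mult_left_mono fle) auto
  also have "\<dots> = N * N powr ((q - p) / p)" unfolding N_def by (simp add: sum_distrib_right)
  also have "\<dots> = N powr (q / p)"
  proof -
    have "N * N powr ((q - p) / p) = N powr 1 * N powr ((q - p) / p)" using N0 by simp
    also have "\<dots> = N powr (1 + (q - p) / p)" by (rule powr_add[symmetric])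
    also have "1 + (q - p) / p = q / p" using assms by (simp add: field_simps)
    finally show ?thesis .
  qed
  finally show ?thesis unfolding N_def .
qed

lemma BH_nonempty:
  assumes d1: "d \<ge> 1"
  shows "\<exists>C. C \<in> BH_consts d"
proof -
  define pd where "pd = 2 * real d / (real d + 1)"
  have pd0: "pd > 0" unfolding pd_def using d1 by auto
  obtain K where K0: "K \<ge> 0" and K: "\<forall>m b z j. (\<forall>S. S \<subseteq> {0..<m} \<longrightarrow> d < card S \<longrightarrow> b S = 0) \<longrightarrow> z \<in> cube m \<longrightarrow>
      cmod (\<Sum>S\<in>{S\<in>Pow {0..<m}. card S = j}. b S * chi S z) \<le> K * supn b m"
    using HP[of d] by blast
  define PH where "PH k H \<longleftrightarrow> (\<forall>m a. (\<forall>S. S \<subseteq> {0..<m} \<longrightarrow> card S \<noteq> k \<longrightarrow> a S = 0) \<longrightarrow>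
     (\<Sum>S\<in>{S\<in>Pow {0..<m}. card S = k}. cmod (a S) powr (2 * real k / (real k + 1)))
       \<le> (H * supn a m) powr (2 * real k / (real k + 1)))" for k H
  have "\<forall>k. \<exists>H. k \<ge> 1 \<longrightarrow> H \<ge> 0 \<and> PH k H"
  proof
    fix k :: nat
    show "\<exists>H. k \<ge> 1 \<longrightarrow> H \<ge> 0 \<and> PH k H"
    proof (cases "k \<ge> 1")
      case True
      from HB[OF True] obtain H where "H \<ge> 0" "PH k H" unfolding PH_def by blast
      then show ?thesis by blast
    qed simp
  qed
  from choice[OF this] obtain Hf where Hf0: "\<forall>k. k \<ge> 1 \<longrightarrow> Hf k \<ge> 0 \<and> PH k (Hf k)" by blast
  have Hf: "\<And>k. k \<ge> 1 \<Longrightarrow> Hf k \<ge> 0 \<and> (\<forall>m a. (\<forall>S. S \<subseteq> {0..<m} \<longrightarrow> card S \<noteq> k \<longrightarrow> a S = 0) \<longrightarrow>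
     (\<Sum>S\<in>{S\<in>Pow {0..<m}. card S = k}. cmod (a S) powr (2 * real k / (real k + 1)))
       \<le> (Hf k * supn a m) powr (2 * real k / (real k + 1)))"
    using Hf0 unfolding PH_def by blast
  define Hm where "Hm = 1 + (\<Sum>k\<in>{1..d}. Hf k)"
  have Hm_ge: "Hf k \<le> Hm" if "1 \<le> k" "k \<le> d" for k
  proof -
    have "Hf k \<le> (\<Sum>k\<in>{1..d}. Hf k)" using that Hf by (intro member_le_sum) auto
    then show ?thesis unfolding Hm_def by simp
  qed
  have Hm1: "Hm \<ge> 1" unfolding Hm_def using Hf by (auto intro!: sum_nonneg)
  define C where "C = (real d + 1) powr (1 / pd) * (Hm * K)"
  have C0: "C \<ge> 0" unfolding C_def using Hm1 K0 by auto
  have main: "(\<Sum>S\<in>{S. S \<subseteq> {0..<m} \<and> card S \<le> d}. cmod (g S) powr pd) powr (1 / pd) \<le> C * supn g m"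
    if hg: "\<forall>S. card S > d \<longrightarrow> g S = 0" for m g
  proof -
    have hg': "\<forall>S. S \<subseteq> {0..<m} \<longrightarrow> d < card S \<longrightarrow> g S = 0" using hg by auto
    define M where "M = Hm * K * supn g m"
    have M0: "M \<ge> 0" unfolding M_def using Hm1 K0 supn_nonneg[of g m] by auto
    have part: "(\<Sum>S\<in>{S\<in>Pow {0..<m}. card S = k}. cmod (g S) powr pd) \<le> M powr pd" if k: "k \<le> d" for k
    proof (cases "k = 0")
      case True
      have e: "{S\<in>Pow {0..<m}. card S = k} = {{}}" using True by (auto simp: card_eq_0_iff finite_subset)
      obtain z where z: "z \<in> cube m" using cube_nonempty by blast
      have "cmod (g {}) = cmod (\<Sum>S\<in>{S\<in>Pow {0..<m}. card S = k}. g S * chi S z)"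
        unfolding e by (simp add: chi_def)
      also have "\<dots> \<le> K * supn g m" by (rule K[rule_format]) (use hg' z in auto)
      also have "\<dots> \<le> M"
      proof -
        have "0 \<le> K * supn g m" using K0 supn_nonneg[of g m] by simp
        then have "1 * (K * supn g m) \<le> Hm * (K * supn g m)" using Hm1 by (intro mult_right_mono) auto
        then show ?thesis unfolding M_def by (simp add: mult.assoc)
      qed
      finally have "cmod (g {}) powr pd \<le> M powr pd" using pd0 by (intro powr_mono2) auto
      then show ?thesis unfolding e by simp
    next
      case False
      then have k1: "k \<ge> 1" by simp
      define pk where "pk = 2 * real k / (real k + 1)"
      have pk0: "pk > 0" unfolding pk_def using k1 by auto
      have pkd: "pk \<le> pd"
      proof -
        have "real k \<le> real d" using k by simp
        then have "real k * (real d + 1) \<le> real d * (real k + 1)" by (simp add: algebra_simps)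
        then show ?thesis unfolding pk_def pd_def using k1 by (simp add: divide_simps)
      qed
      define ak where "ak S = (if card S = k then g S else 0)" for S
      have homk: "\<forall>S. S \<subseteq> {0..<m} \<longrightarrow> card S \<noteq> k \<longrightarrow> ak S = 0" unfolding ak_def by auto
      have supk: "supn ak m \<le> K * supn g m"
      proof (rule supn_le)
        fix z assume z: "z \<in> cube m"
        have "ev ak m z = (\<Sum>S\<in>Pow {0..<m}. if card S = k then g S * chi S z else 0)"
          unfolding ev_def ak_def by (intro sum.cong) auto
        also have "\<dots> = (\<Sum>S\<in>{S\<in>Pow {0..<m}. card S = k}. g S * chi S z)"
          by (rule sum.inter_filter[symmetric]) simp
        finally have "ev ak m z = (\<Sum>S\<in>{S\<in>Pow {0..<m}. card S = k}. g S * chi S z)" .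
        moreover have "cmod (\<Sum>S\<in>{S\<in>Pow {0..<m}. card S = k}. g S * chi S z) \<le> K * supn g m"
          by (rule K[rule_format]) (use hg' z in auto)
        ultimately show "cmod (ev ak m z) \<le> K * supn g m" by simp
      qed
      have A1: "(\<Sum>S\<in>{S\<in>Pow {0..<m}. card S = k}. cmod (g S) powr pd)
          \<le> (\<Sum>S\<in>{S\<in>Pow {0..<m}. card S = k}. cmod (g S) powr pk) powr (pd / pk)"
        by (rule lp_mono) (use pk0 pkd in auto)
      have "(\<Sum>S\<in>{S\<in>Pow {0..<m}. card S = k}. cmod (g S) powr pk)
          = (\<Sum>S\<in>{S\<in>Pow {0..<m}. card S = k}. cmod (ak S) powr pk)"
        unfolding ak_def by (intro sum.cong) auto
      also have "\<dots> \<le> (Hf k * supn ak m) powr pk"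
        using Hf[OF k1] homk unfolding pk_def by blast
      also have "\<dots> \<le> M powr pk"
      proof (intro powr_mono2)
        have "Hf k * supn ak m \<le> Hm * (K * supn g m)"
          using Hf[OF k1] Hm_ge[OF k1 k] supk supn_nonneg[of ak m] supn_nonneg[of g m] K0
          by (intro mult_mono) auto
        then show "Hf k * supn ak m \<le> M" unfolding M_def by (simp add: mult.assoc)
      qed (use pk0 Hf[OF k1] supn_nonneg[of ak m] in auto)
      finally have A2: "(\<Sum>S\<in>{S\<in>Pow {0..<m}. card S = k}. cmod (g S) powr pk) \<le> M powr pk" .
      have "(\<Sum>S\<in>{S\<in>Pow {0..<m}. card S = k}. cmod (g S) powr pk) powr (pd / pk) \<le> (M powr pk) powr (pd / pk)"
        by (rule powr_mono2) (use pd0 pk0 A2 in \<open>auto intro!: sum_nonneg\<close>)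
      with A1 have "(\<Sum>S\<in>{S\<in>Pow {0..<m}. card S = k}. cmod (g S) powr pd) \<le> (M powr pk) powr (pd / pk)"
        by (rule order_trans)
      also have "\<dots> = M powr pd" using pk0 by (simp add: powr_powr)
      finally show ?thesis .
    qed
    have "(\<Sum>S\<in>{S. S \<subseteq> {0..<m} \<and> card S \<le> d}. cmod (g S) powr pd)
        = (\<Sum>k\<le>d. \<Sum>S\<in>{S\<in>{S. S \<subseteq> {0..<m} \<and> card S \<le> d}. card S = k}. cmod (g S) powr pd)"
      by (rule sum_group_card) auto
    also have "\<dots> = (\<Sum>k\<le>d. \<Sum>S\<in>{S\<in>Pow {0..<m}. card S = k}. cmod (g S) powr pd)"
      by (intro sum.cong refl arg_cong2[where f=sum]) auto
    also have "\<dots> \<le> (\<Sum>k\<le>d. M powr pd)" by (intro sum_mono part) auto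
    also have "\<dots> = (real d + 1) * M powr pd" by simp
    finally have tot: "(\<Sum>S\<in>{S. S \<subseteq> {0..<m} \<and> card S \<le> d}. cmod (g S) powr pd) \<le> (real d + 1) * M powr pd" .
    have "(\<Sum>S\<in>{S. S \<subseteq> {0..<m} \<and> card S \<le> d}. cmod (g S) powr pd) powr (1 / pd)
        \<le> ((real d + 1) * M powr pd) powr (1 / pd)"
      using tot pd0 by (intro powr_mono2) (auto intro!: sum_nonneg)
    also have "\<dots> = (real d + 1) powr (1 / pd) * M"
      using pd0 M0 by (simp add: powr_mult powr_powr)
    also have "\<dots> = C * supn g m" unfolding C_def M_def by (simp add: mult_ac)
    finally show ?thesis .
  qed
  have "C \<in> BH_consts d"
    unfolding BH_consts_def
  proof (intro CollectI conjI C0 allI impI)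
    fix m :: nat and g :: "nat set \<Rightarrow> complex"
    assume "\<forall>S. d < card S \<longrightarrow> g S = 0"
    from main[OF this, of m]
    have "(\<Sum>S\<in>{S. S \<subseteq> {0..<m} \<and> card S \<le> d}. cmod (g S) powr pd) powr (1 / pd) \<le> C * supn g m" .
    moreover have "1 / pd = (real d + 1) / (2 * real d)" unfolding pd_def by simp
    ultimately show "(\<Sum>S\<in>{S. S \<subseteq> {0..<m} \<and> card S \<le> d}. cmod (g S) powr (2 * real d / (real d + 1))) powr ((real d + 1) / (2 * real d))
      \<le> C * Max ((\<lambda>x. cmod (\<Sum>S\<in>Pow {0..<m}. g S * chi S x)) ` cube m)"
      unfolding supn_def ev_def pd_def by simp
  qed
  then show ?thesis by blast
qed

definition evec :: "nat \<Rightarrow> bool \<Rightarrow> bool \<Rightarrow> complex" where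
  "evec k \<beta> b = (if k = 3 then (if b = \<beta> then 0 else 1)
      else if k = 1 then (if b then (if \<beta> then 1 else -1) else 1) / complex_of_real (sqrt 2)
      else (if b then (if \<beta> then \<i> else -\<i>) else 1) / complex_of_real (sqrt 2))"

lemma sqrt2_c: "complex_of_real (sqrt 2) * complex_of_real (sqrt 2) = 2"
  by (metis of_real_mult of_real_numeral real_sqrt_mult_self abs_numeral)

lemma evec_expect:
  assumes "k \<in> {1,2,3}" "s \<in> {0,1,2,3}"
  shows "(\<Sum>a\<in>UNIV. \<Sum>b\<in>UNIV. cnj (evec k \<beta> a) * pauli s a b * evec k \<beta> b)
       = (if s = 0 then 1 else if s = k then complex_of_real (sg \<beta>) else 0)"
  using assms sqrt2_c
  by (auto simp: UNIV_bool evec_def pauli_def sg_def field_simps)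

lemma evec_norm:
  assumes "k \<in> {1,2,3}"
  shows "(\<Sum>b\<in>UNIV. (cmod (evec k \<beta> b))\<^sup>2) = 1"
  using assms by (auto simp: UNIV_bool evec_def norm_divide power_divide)


definition Jset :: "nat list \<Rightarrow> nat set" where "Jset s = {j. j < length s \<and> s!j \<noteq> 0}"
definition emb :: "nat list \<Rightarrow> nat set" where "emb s = (\<lambda>j. 3*j + (s!j - 1)) ` Jset s"

lemma pwords_nth: "s \<in> pwords n \<Longrightarrow> j < n \<Longrightarrow> s!j \<in> {0,1,2,3}"
  unfolding pwords_def using nth_mem by blast

lemma finite_pwords[simp]: "finite (pwords n)"
proof -
  have "pwords n = {xs. set xs \<subseteq> {0,1,2,3} \<and> length xs = n}" unfolding pwords_def by auto
  then show ?thesis using finite_lists_length_eq[of "{0::nat,1,2,3}" n] by simp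
qed

lemma finite_Jset[simp]: "finite (Jset s)" unfolding Jset_def by simp

lemma pwords_le3: "s \<in> pwords n \<Longrightarrow> j < n \<Longrightarrow> s!j \<le> 3"
  using pwords_nth by fastforce

lemma pwords_len: "s \<in> pwords n \<Longrightarrow> length s = n" unfolding pwords_def by simp

lemma div3: "a < 3 \<Longrightarrow> b < 3 \<Longrightarrow> 3*j + a = 3*j' + (b::nat) \<Longrightarrow> j = j' \<and> a = b"
  by presburger

lemma emb_inj_j:
  assumes "s \<in> pwords n"
  shows "inj_on (\<lambda>j. 3*j + (s!j - 1)) (Jset s)"
proof (intro inj_onI)
  fix j j' assume j: "j \<in> Jset s" and j': "j' \<in> Jset s" and e: "3*j + (s!j - 1) = 3*j' + (s!j' - 1)"
  have "s!j \<le> 3" "s!j' \<le> 3" using pwords_le3[OF assms] j j' pwords_len[OF assms] unfolding Jset_def by auto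
  then show "j = j'" using e div3[of "s!j - 1" "s!j' - 1" j j'] by auto
qed

lemma card_emb:
  assumes "s \<in> pwords n" shows "card (emb s) = pweight s"
proof -
  have "card (emb s) = card (Jset s)" unfolding emb_def by (rule card_image[OF emb_inj_j[OF assms]])
  then show ?thesis unfolding pweight_def Jset_def by simp
qed

lemma emb_sub: "s \<in> pwords n \<Longrightarrow> emb s \<subseteq> {0..<3*n}"
proof
  fix t assume s: "s \<in> pwords n" and "t \<in> emb s"
  then obtain j where j: "j < n" "s!j \<noteq> 0" "t = 3*j + (s!j - 1)"
    unfolding emb_def Jset_def pwords_def by auto
  have "s!j \<le> 3" using pwords_nth[OF s j(1)] by auto
  then show "t \<in> {0..<3*n}" using j by auto
qed

lemma emb_mem:
  assumes s: "s \<in> pwords n" and j: "j < n" and k: "1 \<le> k" "k \<le> 3"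
  shows "3*j + (k - 1) \<in> emb s \<longleftrightarrow> s!j = k"
proof
  assume "3*j + (k - 1) \<in> emb s"
  then obtain j' where j': "j' < n" "s!j' \<noteq> 0" "3*j + (k - 1) = 3*j' + (s!j' - 1)"
    using s unfolding emb_def Jset_def pwords_def by auto
  have "s!j' \<le> 3" using pwords_nth[OF s j'(1)] by auto
  then have "j = j' \<and> k - 1 = s!j' - 1" using j' k by (intro div3) auto
  then show "s!j = k" using j' k by auto
next
  assume "s!j = k"
  then show "3*j + (k - 1) \<in> emb s" using s j k unfolding emb_def Jset_def pwords_def by auto
qed


lemma emb_inj: "inj_on emb (pwords n)"
proof (intro inj_onI)
  fix s s' assume s: "s \<in> pwords n" and s': "s' \<in> pwords n" and e: "emb s = emb s'"
  show "s = s'"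
  proof (rule nth_equalityI)
    show "length s = length s'" using pwords_len[OF s] pwords_len[OF s'] by simp
    fix j assume "j < length s"
    then have j: "j < n" using pwords_len[OF s] by simp
    show "s!j = s'!j"
    proof (cases "s!j = 0")
      case True
      show ?thesis
      proof (rule ccontr)
        assume ne: "s!j \<noteq> s'!j"
        then have k: "1 \<le> s'!j" "s'!j \<le> 3" using True pwords_le3[OF s' j] by auto
        have "3*j + (s'!j - 1) \<in> emb s'" using emb_mem[OF s' j k] by simp
        then have "s!j = s'!j" using emb_mem[OF s j k] e by simp
        then show False using ne by simp
      qed
    next
      case False
      then have k: "1 \<le> s!j" "s!j \<le> 3" using pwords_le3[OF s j] by auto
      have "3*j + (s!j - 1) \<in> emb s" using emb_mem[OF s j k] by simp
      then show ?thesis using emb_mem[OF s' j k] e by simp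
    qed
  qed
qed

definition tau :: "bool list \<Rightarrow> nat list \<Rightarrow> nat \<Rightarrow> complex" where
  "tau x s j = (if s!j = 0 then 1 else complex_of_real (sg (x!(3*j + (s!j - 1)))) / 3)"

lemma chi_emb_div:
  assumes s: "s \<in> pwords n"
  shows "chi (emb s) x / 3 ^ pweight s = (\<Prod>j<n. tau x s j)"
proof -
  have J: "Jset s \<subseteq> {0..<n}" unfolding Jset_def using pwords_len[OF s] by auto
  have "chi (emb s) x = (\<Prod>j\<in>Jset s. complex_of_real (sg (x!(3*j + (s!j - 1)))))"
    unfolding chi_sg emb_def by (subst prod.reindex[OF emb_inj_j[OF s]]) (simp add: o_def)
  moreover have "pweight s = card (Jset s)" unfolding pweight_def Jset_def ..
  ultimately have "chi (emb s) x / 3 ^ pweight s = (\<Prod>j\<in>Jset s. complex_of_real (sg (x!(3*j + (s!j - 1)))) / 3)"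
    by (simp add: prod_dividef)
  also have "\<dots> = (\<Prod>j<n. if j \<in> Jset s then complex_of_real (sg (x!(3*j + (s!j - 1)))) / 3 else 1)"
    by (rule prod_if_restrict[OF J, symmetric])
  also have "\<dots> = (\<Prod>j<n. tau x s j)"
    unfolding tau_def Jset_def using pwords_len[OF s] by (intro prod.cong) auto
  finally show ?thesis .
qed

definition gq :: "nat \<Rightarrow> (nat list \<Rightarrow> complex) \<Rightarrow> nat set \<Rightarrow> complex" where
  "gq n c T = (if T \<in> emb ` pwords n then c (the_inv_into (pwords n) emb T) / 3 ^ card T else 0)"

lemma gq_emb: "s \<in> pwords n \<Longrightarrow> gq n c (emb s) = c s / 3 ^ pweight s"
  unfolding gq_def using the_inv_into_f_f[OF emb_inj] card_emb by auto

lemma gq_deg: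
  assumes "\<forall>s\<in>pwords n. pweight s > d \<longrightarrow> c s = 0"
  shows "\<forall>T. card T > d \<longrightarrow> gq n c T = 0"
proof (intro allI impI)
  fix T :: "nat set" assume T: "card T > d"
  show "gq n c T = 0"
  proof (cases "T \<in> emb ` pwords n")
    case True
    then obtain s where s: "s \<in> pwords n" "T = emb s" by auto
    then have "pweight s > d" using T card_emb by simp
    then show ?thesis using assms s gq_emb by simp
  qed (simp add: gq_def)
qed

lemma ev_gq: "ev (gq n c) (3*n) x = (\<Sum>s\<in>pwords n. c s * (\<Prod>j<n. tau x s j))"
proof -
  have sub: "emb ` pwords n \<subseteq> Pow {0..<3*n}" using emb_sub by auto
  have "ev (gq n c) (3*n) x = (\<Sum>T\<in>emb ` pwords n. gq n c T * chi T x)"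
    unfolding ev_def by (rule sum.mono_neutral_right) (use sub in \<open>auto simp: gq_def\<close>)
  also have "\<dots> = (\<Sum>s\<in>pwords n. gq n c (emb s) * chi (emb s) x)"
    by (subst sum.reindex[OF emb_inj]) simp
  also have "\<dots> = (\<Sum>s\<in>pwords n. c s * (\<Prod>j<n. tau x s j))"
    by (intro sum.cong refl) (simp add: gq_emb flip: chi_emb_div)
  finally show ?thesis .
qed


definition xi :: "bool list \<Rightarrow> nat \<Rightarrow> nat \<Rightarrow> bool" where "xi x j k = x ! (3*j + (k - 1))"

definition K3 :: "nat \<Rightarrow> nat list set" where "K3 n = {\<kappa>. length \<kappa> = n \<and> set \<kappa> \<subseteq> {1,2,3}}"

definition psi :: "bool list \<Rightarrow> nat \<Rightarrow> nat list \<Rightarrow> bool list \<Rightarrow> complex" where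
  "psi x n \<kappa> r = (\<Prod>j<n. evec (\<kappa>!j) (xi x j (\<kappa>!j)) (r!j))"

lemma K3_nth: "\<kappa> \<in> K3 n \<Longrightarrow> j < n \<Longrightarrow> \<kappa>!j \<in> {1,2,3}"
  unfolding K3_def using nth_mem by blast

lemma card_K3: "card (K3 n) = 3 ^ n"
proof -
  have "K3 n = {xs. set xs \<subseteq> {1::nat,2,3} \<and> length xs = n}" unfolding K3_def by auto
  then show ?thesis using card_lists_length_eq[of "{1::nat,2,3}" n] by (simp add: numeral_3_eq_3)
qed

lemma finite_K3[simp]: "finite (K3 n)"
proof -
  have "K3 n = {xs. set xs \<subseteq> {1::nat,2,3} \<and> length xs = n}" unfolding K3_def by auto
  then show ?thesis using finite_lists_length_eq[of "{1::nat,2,3}" n] by simp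
qed

lemma PS2:
  "(\<Sum>r\<in>cube n. \<Sum>q\<in>cube n. \<Prod>j<n. \<phi> j (r!j) (q!j)) = (\<Prod>j<n. \<Sum>a\<in>UNIV. \<Sum>b\<in>UNIV. (\<phi> j a b :: complex))"
proof -
  have "(\<Sum>r\<in>cube n. \<Sum>q\<in>cube n. \<Prod>j<n. \<phi> j (r!j) (q!j)) = (\<Sum>r\<in>cube n. \<Prod>j<n. \<phi> j (r!j) True + \<phi> j (r!j) False)"
    by (intro sum.cong refl) (rule sum_prod_cube)
  also have "\<dots> = (\<Prod>j<n. (\<phi> j True True + \<phi> j True False) + (\<phi> j False True + \<phi> j False False))"
    by (rule sum_prod_cube)
  also have "\<dots> = (\<Prod>j<n. \<Sum>a\<in>UNIV. \<Sum>b\<in>UNIV. \<phi> j a b)"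
    by (simp add: UNIV_bool algebra_simps)
  finally show ?thesis .
qed

lemma expect:
  assumes s: "s \<in> pwords n" and k: "\<kappa> \<in> K3 n"
  shows "(\<Sum>r\<in>cube n. \<Sum>q\<in>cube n. cnj (psi x n \<kappa> r) * pauli_tensor s r q * psi x n \<kappa> q)
    = (\<Prod>j<n. if s!j = 0 then 1 else if s!j = \<kappa>!j then complex_of_real (sg (xi x j (\<kappa>!j))) else 0)"
proof -
  define \<phi> where "\<phi> j a b = cnj (evec (\<kappa>!j) (xi x j (\<kappa>!j)) a) * pauli (s!j) a b * evec (\<kappa>!j) (xi x j (\<kappa>!j)) b" for j a b
  have "cnj (psi x n \<kappa> r) * pauli_tensor s r q * psi x n \<kappa> q = (\<Prod>j<n. \<phi> j (r!j) (q!j))" for r q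
    unfolding psi_def pauli_tensor_def \<phi>_def pwords_len[OF s] cnj_prod by (simp add: prod.distrib)
  then have "(\<Sum>r\<in>cube n. \<Sum>q\<in>cube n. cnj (psi x n \<kappa> r) * pauli_tensor s r q * psi x n \<kappa> q)
      = (\<Prod>j<n. \<Sum>a\<in>UNIV. \<Sum>b\<in>UNIV. \<phi> j a b)" by (simp add: PS2)
  also have "\<dots> = (\<Prod>j<n. if s!j = 0 then 1 else if s!j = \<kappa>!j then complex_of_real (sg (xi x j (\<kappa>!j))) else 0)"
  proof (intro prod.cong refl)
    fix j assume "j \<in> {..<n}"
    then have "\<kappa>!j \<in> {1,2,3}" "s!j \<in> {0,1,2,3}" using K3_nth[OF k] pwords_nth[OF s] by auto
    from evec_expect[OF this] show "(\<Sum>a\<in>UNIV. \<Sum>b\<in>UNIV. \<phi> j a b) = (if s!j = 0 then 1 else if s!j = \<kappa>!j then complex_of_real (sg (xi x j (\<kappa>!j))) else 0)"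
      unfolding \<phi>_def .
  qed
  finally show ?thesis .
qed

lemma avgK:
  assumes s: "s \<in> pwords n"
  shows "(\<Sum>\<kappa>\<in>K3 n. \<Prod>j<n. if s!j = 0 then 1 else if s!j = \<kappa>!j then complex_of_real (sg (xi x j (\<kappa>!j))) else 0)
    = 3 ^ n * (\<Prod>j<n. tau x s j)"
proof -
  have "(\<Sum>\<kappa>\<in>K3 n. \<Prod>j<n. if s!j = 0 then 1 else if s!j = \<kappa>!j then complex_of_real (sg (xi x j (\<kappa>!j))) else 0)
     = (\<Prod>j<n. \<Sum>k\<in>{1,2,3}. if s!j = 0 then 1 else if s!j = k then complex_of_real (sg (xi x j k)) else 0)"
    unfolding K3_def by (rule sum_prod_lists) simp
  also have "\<dots> = (\<Prod>j<n. 3 * tau x s j)"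
  proof (intro prod.cong refl)
    fix j assume "j \<in> {..<n}"
    then have "s!j \<in> {0,1,2,3}" using pwords_nth[OF s] by auto
    then show "(\<Sum>k\<in>{1,2,3}. if s!j = 0 then 1 else if s!j = k then complex_of_real (sg (xi x j k)) else 0) = 3 * tau x s j"
      unfolding tau_def xi_def by auto
  qed
  also have "\<dots> = 3 ^ n * (\<Prod>j<n. tau x s j)" by (simp add: prod.distrib)
  finally show ?thesis .
qed

lemma psi_unit:
  assumes k: "\<kappa> \<in> K3 n"
  shows "(\<Sum>r\<in>cube n. (cmod (psi x n \<kappa> r))\<^sup>2) = 1"
proof -
  have "(\<Sum>r\<in>cube n. (cmod (psi x n \<kappa> r))\<^sup>2) = (\<Sum>r\<in>cube n. \<Prod>j<n. (cmod (evec (\<kappa>!j) (xi x j (\<kappa>!j)) (r!j)))\<^sup>2)"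
    unfolding psi_def by (simp add: prod_power_distrib flip: prod_norm)
  also have "\<dots> = (\<Prod>j<n. (cmod (evec (\<kappa>!j) (xi x j (\<kappa>!j)) True))\<^sup>2 + (cmod (evec (\<kappa>!j) (xi x j (\<kappa>!j)) False))\<^sup>2)"
    by (rule sum_prod_cube)
  also have "\<dots> = (\<Prod>j<n. (1::real))"
  proof (intro prod.cong refl)
    fix j assume "j \<in> {..<n}"
    then have "\<kappa>!j \<in> {1,2,3}" using K3_nth[OF k] by auto
    from evec_norm[OF this] show "(cmod (evec (\<kappa>!j) (xi x j (\<kappa>!j)) True))\<^sup>2 + (cmod (evec (\<kappa>!j) (xi x j (\<kappa>!j)) False))\<^sup>2 = 1"
      by (simp add: UNIV_bool add.commute)
  qed
  finally show ?thesis by simp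
qed

lemma opnorm_bdd: "bdd_above {sqrt (\<Sum>y\<in>cube n. (cmod (\<Sum>x\<in>cube n. A y x * v x))\<^sup>2) | v.
                        (\<Sum>x\<in>cube n. (cmod (v x))\<^sup>2) = 1}"
proof (rule bdd_aboveI)
  fix z assume "z \<in> {sqrt (\<Sum>y\<in>cube n. (cmod (\<Sum>x\<in>cube n. A y x * v x))\<^sup>2) | v.
                        (\<Sum>x\<in>cube n. (cmod (v x))\<^sup>2) = 1}"
  then obtain v where v: "(\<Sum>x\<in>cube n. (cmod (v x))\<^sup>2) = 1"
    and z: "z = sqrt (\<Sum>y\<in>cube n. (cmod (\<Sum>x\<in>cube n. A y x * v x))\<^sup>2)" by blast
  have v1: "cmod (v x) \<le> 1" if "x \<in> cube n" for x
  proof -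
    have "(cmod (v x))\<^sup>2 \<le> 1\<^sup>2" using v that member_le_sum[of x "cube n" "\<lambda>x. (cmod (v x))\<^sup>2"] by simp
    then show ?thesis by (rule power2_le_imp_le) simp
  qed
  have "cmod (\<Sum>x\<in>cube n. A y x * v x) \<le> (\<Sum>x\<in>cube n. cmod (A y x))" for y
  proof -
    have "cmod (\<Sum>x\<in>cube n. A y x * v x) \<le> (\<Sum>x\<in>cube n. cmod (A y x) * cmod (v x))"
      using norm_sum[of "\<lambda>x. A y x * v x" "cube n"] by (simp add: norm_mult)
    also have "\<dots> \<le> (\<Sum>x\<in>cube n. cmod (A y x))"
      using v1 by (intro sum_mono) (simp add: mult_left_le)
    finally show ?thesis .
  qed
  then have "(\<Sum>y\<in>cube n. (cmod (\<Sum>x\<in>cube n. A y x * v x))\<^sup>2) \<le> (\<Sum>y\<in>cube n. (\<Sum>x\<in>cube n. cmod (A y x))\<^sup>2)"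
    by (intro sum_mono power_mono) auto
  then show "z \<le> sqrt (\<Sum>y\<in>cube n. (\<Sum>x\<in>cube n. cmod (A y x))\<^sup>2)" unfolding z by simp
qed

lemma quad_le:
  assumes u: "(\<Sum>r\<in>cube n. (cmod (\<psi> r))\<^sup>2) = 1"
  shows "cmod (\<Sum>r\<in>cube n. \<Sum>q\<in>cube n. cnj (\<psi> r) * A r q * \<psi> q) \<le> op_norm n A"
proof -
  define Av where "Av r = (\<Sum>q\<in>cube n. A r q * \<psi> q)" for r
  have "(\<Sum>r\<in>cube n. \<Sum>q\<in>cube n. cnj (\<psi> r) * A r q * \<psi> q) = (\<Sum>r\<in>cube n. cnj (\<psi> r) * Av r)"
    unfolding Av_def by (simp add: sum_distrib_left mult.assoc)
  then have "cmod (\<Sum>r\<in>cube n. \<Sum>q\<in>cube n. cnj (\<psi> r) * A r q * \<psi> q) \<le> (\<Sum>r\<in>cube n. cmod (\<psi> r) * cmod (Av r))"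
    using norm_sum[of "\<lambda>r. cnj (\<psi> r) * Av r" "cube n"] by (simp add: norm_mult)
  also have "\<dots> \<le> L2_set (\<lambda>r. cmod (\<psi> r)) (cube n) * L2_set (\<lambda>r. cmod (Av r)) (cube n)"
    using L2_set_mult_ineq[of "\<lambda>r. cmod (\<psi> r)" "\<lambda>r. cmod (Av r)" "cube n"] by simp
  also have "\<dots> = sqrt (\<Sum>y\<in>cube n. (cmod (\<Sum>x\<in>cube n. A y x * \<psi> x))\<^sup>2)"
    unfolding L2_set_def u Av_def by simp
  also have "\<dots> \<le> op_norm n A"
    unfolding op_norm_def by (rule cSup_upper[OF _ opnorm_bdd]) (use u in blast)
  finally show ?thesis .
qed

lemma ev_gq_quantum:
  assumes hA: "\<forall>r\<in>cube n. \<forall>q\<in>cube n. A r q = (\<Sum>s\<in>pwords n. c s * pauli_tensor s r q)"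
  shows "3 ^ n * ev (gq n c) (3*n) x = (\<Sum>\<kappa>\<in>K3 n. \<Sum>r\<in>cube n. \<Sum>q\<in>cube n. cnj (psi x n \<kappa> r) * A r q * psi x n \<kappa> q)"
proof -
  have inner: "(\<Sum>r\<in>cube n. \<Sum>q\<in>cube n. cnj (psi x n \<kappa> r) * A r q * psi x n \<kappa> q)
      = (\<Sum>s\<in>pwords n. c s * (\<Sum>r\<in>cube n. \<Sum>q\<in>cube n. cnj (psi x n \<kappa> r) * pauli_tensor s r q * psi x n \<kappa> q))" for \<kappa>
  proof -
    have "(\<Sum>r\<in>cube n. \<Sum>q\<in>cube n. cnj (psi x n \<kappa> r) * A r q * psi x n \<kappa> q)
        = (\<Sum>r\<in>cube n. \<Sum>q\<in>cube n. \<Sum>s\<in>pwords n. c s * (cnj (psi x n \<kappa> r) * pauli_tensor s r q * psi x n \<kappa> q))"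
      using hA by (intro sum.cong refl) (simp add: sum_distrib_left sum_distrib_right mult_ac)
    also have "\<dots> = (\<Sum>r\<in>cube n. \<Sum>s\<in>pwords n. \<Sum>q\<in>cube n. c s * (cnj (psi x n \<kappa> r) * pauli_tensor s r q * psi x n \<kappa> q))"
      by (intro sum.cong refl) (rule sum.swap)
    also have "\<dots> = (\<Sum>s\<in>pwords n. \<Sum>r\<in>cube n. \<Sum>q\<in>cube n. c s * (cnj (psi x n \<kappa> r) * pauli_tensor s r q * psi x n \<kappa> q))"
      by (rule sum.swap)
    also have "\<dots> = (\<Sum>s\<in>pwords n. c s * (\<Sum>r\<in>cube n. \<Sum>q\<in>cube n. cnj (psi x n \<kappa> r) * pauli_tensor s r q * psi x n \<kappa> q))"
      by (simp add: sum_distrib_left)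
    finally show ?thesis .
  qed
  have "(\<Sum>\<kappa>\<in>K3 n. \<Sum>r\<in>cube n. \<Sum>q\<in>cube n. cnj (psi x n \<kappa> r) * A r q * psi x n \<kappa> q)
      = (\<Sum>\<kappa>\<in>K3 n. \<Sum>s\<in>pwords n. c s * (\<Prod>j<n. if s!j = 0 then 1 else if s!j = \<kappa>!j then complex_of_real (sg (xi x j (\<kappa>!j))) else 0))"
    unfolding inner by (intro sum.cong refl) (simp add: expect)
  also have "\<dots> = (\<Sum>s\<in>pwords n. \<Sum>\<kappa>\<in>K3 n. c s * (\<Prod>j<n. if s!j = 0 then 1 else if s!j = \<kappa>!j then complex_of_real (sg (xi x j (\<kappa>!j))) else 0))"
    by (rule sum.swap)
  also have "\<dots> = (\<Sum>s\<in>pwords n. c s * (3 ^ n * (\<Prod>j<n. tau x s j)))"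
    by (intro sum.cong refl) (simp add: avgK flip: sum_distrib_left)
  also have "\<dots> = 3 ^ n * ev (gq n c) (3*n) x"
    unfolding ev_gq by (simp add: sum_distrib_left mult_ac)
  finally show ?thesis by simp
qed

lemma supn_gq:
  assumes hA: "\<forall>r\<in>cube n. \<forall>q\<in>cube n. A r q = (\<Sum>s\<in>pwords n. c s * pauli_tensor s r q)"
  shows "supn (gq n c) (3*n) \<le> op_norm n A"
proof (rule supn_le)
  fix x :: "bool list"
  have "3 ^ n * cmod (ev (gq n c) (3*n) x) = cmod (3 ^ n * ev (gq n c) (3*n) x)" by (simp add: norm_mult norm_power)
  also have "\<dots> \<le> (\<Sum>\<kappa>\<in>K3 n. cmod (\<Sum>r\<in>cube n. \<Sum>q\<in>cube n. cnj (psi x n \<kappa> r) * A r q * psi x n \<kappa> q))"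
    unfolding ev_gq_quantum[OF hA] by (rule norm_sum)
  also have "\<dots> \<le> (\<Sum>\<kappa>\<in>K3 n. op_norm n A)"
    by (intro sum_mono quad_le psi_unit)
  also have "\<dots> = 3 ^ n * op_norm n A" by (simp add: card_K3)
  finally show "cmod (ev (gq n c) (3*n) x) \<le> op_norm n A" by simp
qed



lemma quantum_bound:
  fixes d n :: nat and A :: "bool list \<Rightarrow> bool list \<Rightarrow> complex" and c :: "nat list \<Rightarrow> complex"
  assumes d1: "d \<ge> 1" and B: "B \<in> BH_consts d" and n1: "n \<ge> 1"
    and hc: "\<forall>s\<in>pwords n. pweight s > d \<longrightarrow> c s = 0"
    and hA: "\<forall>r\<in>cube n. \<forall>q\<in>cube n. A r q = (\<Sum>s\<in>pwords n. c s * pauli_tensor s r q)"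
  shows "(\<Sum>s\<in>{s\<in>pwords n. pweight s \<le> d}. cmod (c s) powr (2 * real d / (real d + 1)))
          powr ((real d + 1) / (2 * real d)) \<le> 3 ^ d * B * op_norm n A"
proof -
  define p where "p = 2 * real d / (real d + 1)"
  define p' where "p' = (real d + 1) / (2 * real d)"
  have p0: "p > 0" "p' > 0" unfolding p_def p'_def using d1 by auto
  have nz: "real d \<noteq> 0" "real d + 1 \<noteq> 0" using d1 by auto
  have pp: "p * p' = 1" unfolding p_def p'_def using nz by (simp add: divide_simps)
  have B0: "B \<ge> 0" and BH: "\<And>m g. m \<ge> 1 \<Longrightarrow> (\<forall>S. card S > d \<longrightarrow> g S = 0) \<Longrightarrow>
      (\<Sum>S\<in>{S. S \<subseteq> {0..<m} \<and> card S \<le> d}. cmod (g S) powr p) powr p'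
      \<le> B * Max ((\<lambda>x. cmod (\<Sum>S\<in>Pow {0..<m}. g S * chi S x)) ` cube m)"
    using B unfolding BH_consts_def p_def p'_def by auto
  define g where "g = gq n c"
  define Y where "Y = (\<Sum>S\<in>{S. S \<subseteq> {0..<3*n} \<and> card S \<le> d}. cmod (g S) powr p)"
  have Y0: "Y \<ge> 0" unfolding Y_def by (auto intro!: sum_nonneg)
  have "Y powr p' \<le> B * supn g (3*n)"
    unfolding Y_def supn_def ev_def using BH[of "3*n" g] gq_deg[OF hc] n1 unfolding g_def by auto
  also have "\<dots> \<le> B * op_norm n A"
    using supn_gq[OF hA] B0 unfolding g_def by (intro mult_left_mono) auto
  finally have YB: "Y powr p' \<le> B * op_norm n A" .
  define X where "X = {s\<in>pwords n. pweight s \<le> d}"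
  have "(\<Sum>s\<in>X. cmod (c s) powr p) \<le> (\<Sum>s\<in>X. (3 ^ d) powr p * cmod (g (emb s)) powr p)"
  proof (intro sum_mono)
    fix s assume s: "s \<in> X"
    then have sp: "s \<in> pwords n" and w: "pweight s \<le> d" unfolding X_def by auto
    have "cmod (c s) = 3 ^ pweight s * cmod (g (emb s))"
      unfolding g_def gq_emb[OF sp] by (simp add: norm_divide norm_power)
    also have "\<dots> \<le> 3 ^ d * cmod (g (emb s))"
      using w by (intro mult_right_mono power_increasing) auto
    finally have "cmod (c s) powr p \<le> (3 ^ d * cmod (g (emb s))) powr p"
      using p0 by (intro powr_mono2) auto
    then show "cmod (c s) powr p \<le> (3 ^ d) powr p * cmod (g (emb s)) powr p"
      by (simp add: powr_mult)
  qed
  also have "\<dots> = (3 ^ d) powr p * (\<Sum>T\<in>emb ` X. cmod (g T) powr p)"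
  proof -
    have inj: "inj_on emb X" using emb_inj unfolding X_def by (rule inj_on_subset) auto
    show ?thesis by (simp add: sum.reindex[OF inj] sum_distrib_left)
  qed
  also have "\<dots> \<le> (3 ^ d) powr p * Y"
  proof (intro mult_left_mono)
    have "emb ` X \<subseteq> {S. S \<subseteq> {0..<3*n} \<and> card S \<le> d}"
      unfolding X_def using emb_sub card_emb by auto
    then show "(\<Sum>T\<in>emb ` X. cmod (g T) powr p) \<le> Y"
      unfolding Y_def by (intro sum_mono2) auto
  qed simp
  finally have XY: "(\<Sum>s\<in>X. cmod (c s) powr p) \<le> (3 ^ d) powr p * Y" .
  have "(\<Sum>s\<in>X. cmod (c s) powr p) powr p' \<le> ((3 ^ d) powr p * Y) powr p'"
    using XY p0 by (intro powr_mono2) (auto intro!: sum_nonneg)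
  also have "\<dots> = 3 ^ d * Y powr p'"
    using pp by (simp add: powr_mult powr_powr)
  also have "\<dots> \<le> 3 ^ d * (B * op_norm n A)"
    using YB by (intro mult_left_mono) auto
  finally show ?thesis unfolding X_def p_def p'_def by (simp add: mult.assoc)
qed

lemma BH_ge1:
  assumes d1: "d \<ge> 1" and B: "B \<in> BH_consts d"
  shows "B \<ge> 1"
proof -
  define g :: "nat set \<Rightarrow> complex" where "g S = (if S = {} then 1 else 0)" for S
  have deg: "\<forall>S. card S > d \<longrightarrow> g S = 0" unfolding g_def by auto
  have "(\<Sum>S\<in>{S. S \<subseteq> {0..<1} \<and> card S \<le> d}. cmod (g S) powr (2 * real d / (real d + 1)))
        powr ((real d + 1) / (2 * real d)) \<le> B * Max ((\<lambda>x. cmod (\<Sum>S\<in>Pow {0..<1}. g S * chi S x)) ` cube 1)"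
    using B deg unfolding BH_consts_def by auto
  moreover have "(\<Sum>S\<in>{S. S \<subseteq> {0..<1} \<and> card S \<le> d}. cmod (g S) powr (2 * real d / (real d + 1))) = 1"
  proof -
    have "(\<Sum>S\<in>{S. S \<subseteq> {0..<1} \<and> card S \<le> d}. cmod (g S) powr (2 * real d / (real d + 1)))
        = (\<Sum>S\<in>{S. S \<subseteq> {0..<1::nat} \<and> card S \<le> d}. if S = {} then 1 else (0::real))"
      unfolding g_def by (rule sum.cong) auto
    also have "\<dots> = 1"
    proof -
      have fin: "finite {S. S \<subseteq> {0..<1::nat} \<and> card S \<le> d}"
        by (rule finite_subset[of _ "Pow {0..<1}"]) auto
      then show ?thesis by (simp add: sum.delta)
    qed
    finally show ?thesis .
  qed
  moreover have "(\<lambda>x. cmod (\<Sum>S\<in>Pow {0..<1}. g S * chi S x)) ` cube 1 = {1}"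
  proof -
    have "(\<Sum>S\<in>Pow {0..<1}. g S * chi S x) = 1" for x
    proof -
      have "(\<Sum>S\<in>Pow {0..<1}. g S * chi S x) = (\<Sum>S\<in>Pow {0..<1::nat}. if S = {} then 1 else (0::complex))"
        unfolding g_def by (intro sum.cong refl) (auto simp: chi_def)
      also have "\<dots> = 1" by (simp add: sum.delta)
      finally show ?thesis .
    qed
    then show ?thesis using cube_nonempty[of 1] by auto
  qed
  ultimately show ?thesis by simp
qed

theorem theorem1p2:
  fixes d :: nat
  assumes "d \<ge> 1"
  shows "\<exists>C > 0.
    (\<forall>(n::nat) (A :: bool list \<Rightarrow> bool list \<Rightarrow> complex) (c :: nat list \<Rightarrow> complex).
       n \<ge> 1 \<longrightarrow>
       (\<forall>s\<in>pwords n. pweight s > d \<longrightarrow> c s = 0) \<longrightarrow>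
       (\<forall>r\<in>cube n. \<forall>q\<in>cube n. A r q = (\<Sum>s\<in>pwords n. c s * pauli_tensor s r q)) \<longrightarrow>
       (\<Sum>s\<in>{s\<in>pwords n. pweight s \<le> d}. cmod (c s) powr (2 * real d / (real d + 1)))
          powr ((real d + 1) / (2 * real d))
       \<le> C * op_norm n A)
    \<and> C \<le> 3 ^ d * BH d"
proof -
  obtain B0 where B0: "B0 \<in> BH_consts d" using BH_nonempty[OF assms] by blast
  have ne: "BH_consts d \<noteq> {}" using B0 by blast
  have ge1: "\<And>B. B \<in> BH_consts d \<Longrightarrow> 1 \<le> B" using BH_ge1[OF assms] by blast
  have bdd: "bdd_below (BH_consts d)" using ge1 by (intro bdd_belowI) 
  have BHd1: "BH d \<ge> 1" unfolding BH_def using ne ge1 by (intro cInf_greatest) auto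
  have BHle: "\<And>B. B \<in> BH_consts d \<Longrightarrow> BH d \<le> B" unfolding BH_def using bdd by (intro cInf_lower)
  define C where "C = 3 ^ d * BH d"
  have Cpos: "C > 0" unfolding C_def using BHd1 by simp
  have main: "L \<le> C * op_norm n A"
    if hL: "\<And>B. B \<in> BH_consts d \<Longrightarrow> L \<le> 3 ^ d * B * op_norm n A" for L n A
  proof (cases "op_norm n A > 0")
    case True
    have "L / (3 ^ d * op_norm n A) \<le> BH d"
      unfolding BH_def
    proof (rule cInf_greatest[OF ne])
      fix B assume "B \<in> BH_consts d"
      then have "L \<le> B * (3 ^ d * op_norm n A)" using hL by (simp add: mult_ac)
      then show "L / (3 ^ d * op_norm n A) \<le> B" using True by (simp add: divide_le_eq)
    qed
    then show ?thesis unfolding C_def using True by (simp add: divide_le_eq mult_ac)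
  next
    case False
    have "L \<le> 3 ^ d * B0 * op_norm n A" by (rule hL[OF B0])
    also have "\<dots> = (3 ^ d * op_norm n A) * B0" by (simp add: mult_ac)
    also have "\<dots> \<le> (3 ^ d * op_norm n A) * BH d"
      using False BHle[OF B0] by (intro mult_left_mono_neg) (auto simp: mult_nonneg_nonpos)
    finally show ?thesis unfolding C_def by (simp add: mult_ac)
  qed
  show ?thesis
  proof (intro exI[of _ C] conjI allI impI)
    show "C > 0" by (rule Cpos)
    show "C \<le> 3 ^ d * BH d" unfolding C_def by simp
    fix n :: nat and A :: "bool list \<Rightarrow> bool list \<Rightarrow> complex" and c :: "nat list \<Rightarrow> complex"
    assume n1: "n \<ge> 1" and hc: "\<forall>s\<in>pwords n. pweight s > d \<longrightarrow> c s = 0"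
      and hA: "\<forall>r\<in>cube n. \<forall>q\<in>cube n. A r q = (\<Sum>s\<in>pwords n. c s * pauli_tensor s r q)"
    show "(\<Sum>s\<in>{s\<in>pwords n. pweight s \<le> d}. cmod (c s) powr (2 * real d / (real d + 1)))
          powr ((real d + 1) / (2 * real d)) \<le> C * op_norm n A"
      by (rule main) (rule quantum_bound[OF assms _ n1 hc hA])
  qed
qed

end
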